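(* Let $Q$ be a non-empty quasi-order. The map $g: i^F_{\omega^\omega}(Q)\to\mathsf{T_f}(Q)$ is well-defined and is an order-embedding: for all $\sigma,\tau\in i^F_{\omega^\omega}(Q)$, $\sigma\preceq\tau$ iff $g(\sigma)\le_T g(\tau)$. Well-definedness means that for every $\sigma$ of length $\omega^n$ with $0<n<\omega$, the set $\mathrm{factors}(\sigma)$ is finite modulo $\preceq$-equivalence.
   Context: Sequences: a transfinite sequence over $Q$ of length $\alpha$ (with $\alpha\ne0$) is a function $\sigma:\alpha\to Q$, and $|\sigma|=\alpha$. Define $\sigma\preceq\tau$ if there is a strictly increasing $f:|\sigma|\to|\tau|$ with $\sigma(i)\le_Q\tau(f(i))$ for all $i$. Finite range means finitely many values; $\mathrm{range}(\sigma)$ is the set of values, with the induced order. A proper tail of $\sigma$ is $i\mapsto\sigma(\delta+i)$ for some $0<\delta<|\sigma|$. The sequence $\sigma$ is indecomposable if it embeds into each of its proper tails. $\tau^\omega$ denotes the concatenation of $\omega$ copies of $\tau$. $i^F_\alpha(P)$ is the set of indecomposable finite-range sequences over $P$ of length $<\alpha$. Indecomposable sequences in $i^F_{\omega^\omega}(Q)$ have length $\omega^n$ for some $n<\omega$. Cofinal factors: for indecomposable $\sigma$, $\mathrm{factors}(\sigma)=\{\tau\in i^F_{|\sigma|}(\mathrm{range}(\sigma)) : \tau^\omega\preceq\sigma\}$. Trees: $\mathsf{T_f}(Q)$ is the smallest class containing the leaf $\cdot q$ for each $q\in Q$, and containing $\cdot(\tau_0,\dots,\tau_{k-1})$ (an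 unlabelled root whose children are the $\tau_i$) for every finite set $\{\tau_0,\dots,\tau_{k-1}\}\subseteq\mathsf{T_f}(Q)$ with $k\ge1$. Its order $\le_T$ is defined recursively: - $\cdot x\le_T\cdot y$ iff $x\le_Q y$; - $\cdot x\le_T\cdot(\tau_j)_{j<l}$ iff $\cdot x\le_T\tau_j$ for some $j$; - $\cdot(\sigma_i)_{i<k}\le_T\cdot(\tau_j)_{j<l}$ iff every $\sigma_i$ is $\le_T$ some $\tau_j$; - a non-leaf tree is never $\le_T$ a leaf. The map $g$ is defined by recursion on length: - $g(\langle q\rangle)=\cdot q$ for a length-one sequence $\langle q\rangle$; - if $|\sigma|=\omega^n$ with $0<n<\omega$ and $\mathrm{factors}(\sigma)$ is, up to $\preceq$-equivalence, a finite set with representatives $\sigma_0,\dots,\sigma_{k-1}$, then $g(\sigma)=\cdot(g(\sigma_0),\dots,g(\sigma_{k-1}))$. *)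

theory Defs
  imports Main "HOL-Library.FSet"
begin

text \<open>An ordinal below omega^omega is represented by the list of its Cantor normal
 form coefficients, most significant first: [c_m, ..., c_0] stands for
 omega^m * c_m + ... + omega^0 * c_0, normalised so that the leading coefficient is
 nonzero (the empty list is 0).\<close>

type_synonym ord = "nat list"

definition is_ord :: "ord \<Rightarrow> bool" where
  "is_ord xs \<longleftrightarrow> xs = [] \<or> hd xs \<noteq> 0"

text \<open>Ordinal order: on normalised lists it is the length-lexicographic order.\<close>
definition olt :: "ord \<Rightarrow> ord \<Rightarrow> bool" where
  "olt a b \<longleftrightarrow> (a, b) \<in> lenlex less_than"

definition omega_pow :: "nat \<Rightarrow> ord" where
  "omega_pow n = 1 # replicate n 0"

definition oadd :: "ord \<Rightarrow> ord \<Rightarrow> ord" where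
  "oadd d i = (if i = [] then d
     else if length d < length i then i
     else take (length d - length i) d @ [d ! (length d - length i) + hd i] @ tl i)"

definition omul_nat :: "ord \<Rightarrow> nat \<Rightarrow> ord" where
  "omul_nat a k = (if k = 0 \<or> a = [] then [] else (hd a * k) # tl a)"

definition odom :: "ord \<Rightarrow> ord set" where
  "odom a = {b. is_ord b \<and> olt b a}"

text \<open>A transfinite sequence is a pair (length, values); only the values on
 odom (length) matter.\<close>
type_synonym 'q tseq = "ord \<times> (ord \<Rightarrow> 'q)"

definition seq_len :: "'q tseq \<Rightarrow> ord" where
  "seq_len s = fst s"

definition seq_at :: "'q tseq \<Rightarrow> ord \<Rightarrow> 'q" where
  "seq_at s i = snd s i"

definition valid_seq :: "'q tseq \<Rightarrow> bool" where
  "valid_seq s \<longleftrightarrow> is_ord (seq_len s) \<and> seq_len s \<noteq> []"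

definition seq_range :: "'q tseq \<Rightarrow> 'q set" where
  "seq_range s = seq_at s ` odom (seq_len s)"

definition emb :: "('q::preorder) tseq \<Rightarrow> 'q tseq \<Rightarrow> bool" where
  "emb s t \<longleftrightarrow> (\<exists>f.
     (\<forall>i\<in>odom (seq_len s). f i \<in> odom (seq_len t) \<and> seq_at s i \<le> seq_at t (f i)) \<and>
     (\<forall>i\<in>odom (seq_len s). \<forall>j\<in>odom (seq_len s). olt i j \<longrightarrow> olt (f i) (f j)))"

definition seq_equiv :: "('q::preorder) tseq \<Rightarrow> 'q tseq \<Rightarrow> bool" where
  "seq_equiv s t \<longleftrightarrow> emb s t \<and> emb t s"

definition seq_tail :: "'q tseq \<Rightarrow> ord \<Rightarrow> 'q tseq" where
  "seq_tail s d = ((THE g. is_ord g \<and> oadd d g = seq_len s), (\<lambda>i. seq_at s (oadd d i)))"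

definition indecomposable :: "('q::preorder) tseq \<Rightarrow> bool" where
  "indecomposable s \<longleftrightarrow>
     (\<forall>d. is_ord d \<and> d \<noteq> [] \<and> olt d (seq_len s) \<longrightarrow> emb s (seq_tail s d))"

definition omega_concat :: "'q tseq \<Rightarrow> 'q tseq" where
  "omega_concat t = (omega_pow (length (seq_len t)),
     (\<lambda>b. seq_at t (THE r. is_ord r \<and> olt r (seq_len t) \<and>
                      (\<exists>k. b = oadd (omul_nat (seq_len t) k) r))))"

definition iF :: "('q::preorder) set \<Rightarrow> ord \<Rightarrow> 'q tseq set" where
  "iF P a = {s. valid_seq s \<and> olt (seq_len s) a \<and> finite (seq_range s) \<and>
                seq_range s \<subseteq> P \<and> indecomposable s}"

text \<open>i^F_{omega^omega}(Q), Q the whole (preordered) type: every valid sequence has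
 length below omega^omega.\<close>
definition iF_ww :: "('q::preorder) tseq set" where
  "iF_ww = {s. valid_seq s \<and> finite (seq_range s) \<and> indecomposable s}"

definition factors :: "('q::preorder) tseq \<Rightarrow> 'q tseq set" where
  "factors s = {t \<in> iF (seq_range s) (seq_len s). emb (omega_concat t) s}"

definition finite_mod_equiv :: "('q::preorder) tseq set \<Rightarrow> bool" where
  "finite_mod_equiv A \<longleftrightarrow> (\<exists>F. finite F \<and> F \<subseteq> A \<and> (\<forall>t\<in>A. \<exists>r\<in>F. seq_equiv t r))"

datatype 'q ftree = Leaf 'q | Node "'q ftree fset"

inductive tree_wf :: "'q ftree \<Rightarrow> bool" where
  "tree_wf (Leaf x)"
| "ts \<noteq> {||} \<Longrightarrow> (\<forall>t. t |\<in>| ts \<longrightarrow> tree_wf t) \<Longrightarrow> tree_wf (Node ts)"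

inductive le_T :: "('q::preorder) ftree \<Rightarrow> 'q ftree \<Rightarrow> bool" where
  leaf_leaf: "x \<le> y \<Longrightarrow> le_T (Leaf x) (Leaf y)"
| leaf_node: "t |\<in>| ts \<Longrightarrow> le_T (Leaf x) t \<Longrightarrow> le_T (Leaf x) (Node ts)"
| node_node: "(\<forall>s. s |\<in>| ss \<longrightarrow> (\<exists>t. t |\<in>| ts \<and> le_T s t)) \<Longrightarrow> le_T (Node ss) (Node ts)"

section \<open>The map g, as a relation (the tree depends on the chosen representatives)\<close>

inductive is_g :: "('q::preorder) tseq \<Rightarrow> 'q ftree \<Rightarrow> bool" where
  g_one: "seq_len s = omega_pow 0 \<Longrightarrow> is_g s (Leaf (seq_at s []))"
| g_pow: "seq_len s = omega_pow n \<Longrightarrow> 0 < n \<Longrightarrow>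
     fset F \<subseteq> factors s \<Longrightarrow>
     (\<forall>t\<in>factors s. \<exists>r. r |\<in>| F \<and> seq_equiv t r) \<Longrightarrow>
     (\<forall>r r'. r |\<in>| F \<longrightarrow> r' |\<in>| F \<longrightarrow> seq_equiv r r' \<longrightarrow> r = r') \<Longrightarrow>
     (\<forall>r. r |\<in>| F \<longrightarrow> is_g r (h r)) \<Longrightarrow>
     is_g s (Node (h |`| F))"

end

theory Submission
  imports Defs "HOL-Library.Infinite_Set"
begin

definition LT :: "(nat \<times> nat) set" where "LT = {(a,b). a < b}"

definition llt :: "nat list \<Rightarrow> nat list \<Rightarrow> bool" where
  "llt xs ys \<longleftrightarrow> (xs, ys) \<in> lexord LT"

definition lle :: "nat list \<Rightarrow> nat list \<Rightarrow> bool" where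
  "lle xs ys \<longleftrightarrow> llt xs ys \<or> xs = ys"

lemma llt_Nil_Cons[simp]: "llt [] (y # ys)"
  by (simp add: llt_def)

lemma llt_Nil2[simp]: "\<not> llt xs []"
  by (simp add: llt_def)

lemma llt_Nil1: "llt [] ys \<longleftrightarrow> ys \<noteq> []"
  by (cases ys) auto

lemma llt_Cons_Cons[simp]: "llt (a # x) (b # y) \<longleftrightarrow> a < b \<or> a = b \<and> llt x y"
  by (simp add: llt_def LT_def)

lemma llt_irrefl[simp]: "\<not> llt x x"
  unfolding llt_def by (rule lexord_irreflexive) (simp add: LT_def)

lemma trans_LT: "trans LT"
  by (auto simp: trans_def LT_def)

lemma llt_trans: "llt x y \<Longrightarrow> llt y z \<Longrightarrow> llt x z"
  unfolding llt_def using lexord_trans trans_LT by blast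

lemma llt_linear: "llt x y \<or> x = y \<or> llt y x"
  unfolding llt_def by (rule lexord_linear) (auto simp: LT_def)

lemma llt_asym: "llt x y \<Longrightarrow> \<not> llt y x"
  using llt_trans llt_irrefl by blast

lemma lle_refl[simp]: "lle x x" by (simp add: lle_def)

lemma lle_trans: "lle x y \<Longrightarrow> lle y z \<Longrightarrow> lle x z"
  unfolding lle_def using llt_trans by blast

lemma lle_llt_trans: "lle x y \<Longrightarrow> llt y z \<Longrightarrow> llt x z"
  unfolding lle_def using llt_trans by blast

lemma llt_lle_trans: "llt x y \<Longrightarrow> lle y z \<Longrightarrow> llt x z"
  unfolding lle_def using llt_trans by blast

lemma llt_imp_lle: "llt x y \<Longrightarrow> lle x y" by (simp add: lle_def)

lemma not_llt: "\<not> llt x y \<longleftrightarrow> lle y x"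
  unfolding lle_def using llt_linear llt_asym by blast

lemma not_lle: "\<not> lle x y \<longleftrightarrow> llt y x"
  unfolding lle_def using llt_linear llt_asym by blast

lemma llt_append_same[simp]: "llt (zs @ x) (zs @ y) \<longleftrightarrow> llt x y"
  by (induct zs) auto

lemma lle_Cons_Cons: "lle (a # x) (b # y) \<longleftrightarrow> a < b \<or> a = b \<and> lle x y"
  by (auto simp: lle_def)

lemma llt_Cons_hd: "llt (a # x) (b # y) \<Longrightarrow> a \<le> b"
  by auto

type_synonym 'q gs = "nat list set \<times> (nat list \<Rightarrow> 'q)"

definition emap :: "(nat list \<Rightarrow> nat list) \<Rightarrow> ('q::preorder) gs \<Rightarrow> 'q gs \<Rightarrow> bool" where
  "emap f X Y \<longleftrightarrow> (\<forall>i\<in>fst X. f i \<in> fst Y \<and> snd X i \<le> snd Y (f i)) \<and>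
     (\<forall>i\<in>fst X. \<forall>j\<in>fst X. llt i j \<longrightarrow> llt (f i) (f j))"

definition embg :: "('q::preorder) gs \<Rightarrow> 'q gs \<Rightarrow> bool" where
  "embg X Y \<longleftrightarrow> (\<exists>f. emap f X Y)"

lemma emapI:
  assumes "\<And>i. i \<in> fst X \<Longrightarrow> f i \<in> fst Y"
    and "\<And>i. i \<in> fst X \<Longrightarrow> snd X i \<le> snd Y (f i)"
    and "\<And>i j. i \<in> fst X \<Longrightarrow> j \<in> fst X \<Longrightarrow> llt i j \<Longrightarrow> llt (f i) (f j)"
  shows "emap f X Y"
  using assms unfolding emap_def by blast

lemma emapD:
  assumes "emap f X Y"
  shows "i \<in> fst X \<Longrightarrow> f i \<in> fst Y"
    and "i \<in> fst X \<Longrightarrow> snd X i \<le> snd Y (f i)"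
    and "i \<in> fst X \<Longrightarrow> j \<in> fst X \<Longrightarrow> llt i j \<Longrightarrow> llt (f i) (f j)"
  using assms unfolding emap_def by blast+

lemma emap_lle:
  assumes "emap f X Y" "i \<in> fst X" "j \<in> fst X" "lle i j"
  shows "lle (f i) (f j)"
  using assms emapD(3)[OF assms(1)] unfolding lle_def by blast

lemma emap_comp:
  "emap f X Y \<Longrightarrow> emap g Y Z \<Longrightarrow> emap (g \<circ> f) X Z"
  unfolding emap_def by (auto intro: order_trans)

lemma embg_trans: "embg X Y \<Longrightarrow> embg Y Z \<Longrightarrow> embg X Z"
  unfolding embg_def using emap_comp by blast

lemma emap_id: "fst X \<subseteq> fst Y \<Longrightarrow> (\<And>i. i \<in> fst X \<Longrightarrow> snd X i \<le> snd Y i) \<Longrightarrow> emap id X Y"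
  unfolding emap_def by auto

lemma embg_refl[simp]: "embg X X"
  unfolding embg_def using emap_id[of X X] by auto

lemma embg_sub: "fst X \<subseteq> fst Y \<Longrightarrow> (\<And>i. i \<in> fst X \<Longrightarrow> snd X i \<le> snd Y i) \<Longrightarrow> embg X Y"
  unfolding embg_def using emap_id by blast

lemma emap_restrict:
  "emap f X Y \<Longrightarrow> (\<And>i. i \<in> fst X \<Longrightarrow> P (f i)) \<Longrightarrow> emap f X ({y\<in>fst Y. P y}, snd Y)"
  unfolding emap_def by auto

lemma emap_empty: "fst X = {} \<Longrightarrow> emap f X Y"
  unfolding emap_def by auto

lemma emap_inj: "emap f X Y \<Longrightarrow> i \<in> fst X \<Longrightarrow> j \<in> fst X \<Longrightarrow> f i = f j \<Longrightarrow> i = j"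
  using emapD(3) llt_linear llt_irrefl by metis

definition sumg :: "(nat \<Rightarrow> 'q gs) \<Rightarrow> 'q gs" where
  "sumg X = ({xs. xs \<noteq> [] \<and> tl xs \<in> fst (X (hd xs))}, \<lambda>xs. snd (X (hd xs)) (tl xs))"

definition catg :: "'q gs list \<Rightarrow> 'q gs" where
  "catg L = ({xs. xs \<noteq> [] \<and> hd xs < length L \<and> tl xs \<in> fst (L ! hd xs)}, \<lambda>xs. snd (L ! hd xs) (tl xs))"

definition omg :: "'q gs \<Rightarrow> 'q gs" where
  "omg X = sumg (\<lambda>_. X)"

definition lev :: "nat \<Rightarrow> (nat list \<Rightarrow> 'q) \<Rightarrow> 'q gs" where
  "lev n l = ({xs. length xs = n}, l)"

definition tailg :: "'q gs \<Rightarrow> nat list \<Rightarrow> 'q gs" where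
  "tailg X d = ({x\<in>fst X. lle d x}, snd X)"

definition indecg :: "('q::preorder) gs \<Rightarrow> bool" where
  "indecg X \<longleftrightarrow> (\<forall>d\<in>fst X. embg X (tailg X d))"

lemma mem_sumg: "xs \<in> fst (sumg X) \<longleftrightarrow> (\<exists>p a. xs = p # a \<and> a \<in> fst (X p))"
  by (cases xs) (auto simp: sumg_def)

lemma Cons_mem_sumg[simp]: "p # a \<in> fst (sumg X) \<longleftrightarrow> a \<in> fst (X p)"
  by (auto simp: sumg_def)

lemma Nil_mem_sumg[simp]: "[] \<notin> fst (sumg X)"
  by (auto simp: sumg_def)

lemma snd_sumg[simp]: "snd (sumg X) (p # a) = snd (X p) a"
  by (simp add: sumg_def)

lemma mem_catg: "xs \<in> fst (catg L) \<longleftrightarrow> (\<exists>i a. xs = i # a \<and> i < length L \<and> a \<in> fst (L ! i))"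
  by (cases xs) (auto simp: catg_def)

lemma Cons_mem_catg[simp]: "i # a \<in> fst (catg L) \<longleftrightarrow> i < length L \<and> a \<in> fst (L ! i)"
  by (auto simp: catg_def)

lemma Nil_mem_catg[simp]: "[] \<notin> fst (catg L)"
  by (auto simp: catg_def)

lemma snd_catg[simp]: "snd (catg L) (i # a) = snd (L ! i) a"
  by (simp add: catg_def)

lemma Cons_mem_omg[simp]: "c # a \<in> fst (omg X) \<longleftrightarrow> a \<in> fst X"
  by (simp add: omg_def)

lemma Nil_mem_omg[simp]: "[] \<notin> fst (omg X)"
  by (simp add: omg_def)

lemma mem_omg: "xs \<in> fst (omg X) \<longleftrightarrow> (\<exists>c a. xs = c # a \<and> a \<in> fst X)"
  by (simp add: omg_def mem_sumg)

lemma snd_omg[simp]: "snd (omg X) (c # a) = snd X a"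
  by (simp add: omg_def)

lemma fst_lev[simp]: "fst (lev n l) = {xs. length xs = n}"
  by (simp add: lev_def)

lemma snd_lev[simp]: "snd (lev n l) = l"
  by (simp add: lev_def)

lemma fst_tailg[simp]: "fst (tailg X d) = {x\<in>fst X. lle d x}"
  by (simp add: tailg_def)

lemma snd_tailg[simp]: "snd (tailg X d) = snd X"
  by (simp add: tailg_def)

lemma omg_mono:
  assumes "embg X Y" shows "embg (omg X) (omg Y)"
proof -
  from assms obtain f where f: "emap f X Y" unfolding embg_def by blast
  have "emap (\<lambda>xs. hd xs # f (tl xs)) (omg X) (omg Y)"
    by (rule emapI) (auto simp: mem_omg emapD[OF f])
  thus ?thesis unfolding embg_def by blast
qed

lemma indecg_omg: "indecg (omg X)"
  unfolding indecg_def
proof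
  fix d assume "d \<in> fst (omg X)"
  then obtain c a where d: "d = c # a" by (auto simp: mem_omg)
  have "emap (\<lambda>xs. (Suc c + hd xs) # tl xs) (omg X) (tailg (omg X) d)"
    by (rule emapI) (auto simp: mem_omg d lle_def)
  thus "embg (omg X) (tailg (omg X) d)" unfolding embg_def by blast
qed

lemma embg_Cons_shift: "embg X Y \<Longrightarrow> embg X (omg Y)"
proof -
  assume "embg X Y"
  then obtain f where f: "emap f X Y" unfolding embg_def by blast
  have "emap (\<lambda>xs. 0 # f xs) X (omg Y)"
    by (rule emapI) (auto simp: emapD[OF f])
  thus ?thesis unfolding embg_def by blast
qed


lemma key_less:
  fixes i i' n c c' :: nat
  assumes "i < n" "i' < n"
  shows "c * n + i < c' * n + i' \<longleftrightarrow> (c < c' \<or> c = c' \<and> i < i')"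
proof
  assume h: "c * n + i < c' * n + i'"
  show "c < c' \<or> c = c' \<and> i < i'"
  proof (rule ccontr)
    assume "\<not> (c < c' \<or> c = c' \<and> i < i')"
    hence "c' < c \<or> c = c' \<and> i' \<le> i" by auto
    thus False
    proof
      assume "c' < c"
      hence "Suc c' \<le> c" by simp
      hence "Suc c' * n \<le> c * n" by (rule mult_le_mono1)
      thus False using h assms by simp
    next
      assume "c = c' \<and> i' \<le> i" thus False using h by simp
    qed
  qed
next
  assume "c < c' \<or> c = c' \<and> i < i'"
  thus "c * n + i < c' * n + i'"
  proof
    assume "c < c'"
    hence "Suc c \<le> c'" by simp
    hence "Suc c * n \<le> c' * n" by (rule mult_le_mono1)
    thus ?thesis using assms by simp
  qed simp
qed

lemma key_eq:
  fixes i i' n c c' :: nat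
  assumes "i < n" "i' < n" "c * n + i = c' * n + i'"
  shows "c = c' \<and> i = i'"
  using key_less[OF assms(1,2), of c c'] key_less[OF assms(2,1), of c' c] assms(3)
  by (metis less_irrefl linorder_neqE_nat)

lemma key_mod[simp]: "i < n \<Longrightarrow> (c * n + i) mod n = (i::nat)"
  by simp

lemma ASM:
  fixes X :: "nat \<Rightarrow> ('q::preorder) gs"
  assumes ne: "\<And>p. fst (X p) \<noteq> {}"
    and rec: "\<And>p \<beta>. \<beta> \<in> B \<Longrightarrow> \<exists>\<gamma>\<in>B. embg (X p) ({x\<in>B. lle \<beta> x \<and> llt x \<gamma>}, m)"
    and b0: "\<beta>0 \<in> B"
  shows "embg (sumg X) ({x\<in>B. lle \<beta>0 x}, m)"
proof -
  have "\<forall>p \<beta>. \<exists>\<gamma> f. \<beta> \<in> B \<longrightarrow> \<gamma> \<in> B \<and> emap f (X p) ({x\<in>B. lle \<beta> x \<and> llt x \<gamma>}, m)"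
    using rec unfolding embg_def by blast
  then obtain G F where GF: "\<And>p \<beta>. \<beta> \<in> B \<Longrightarrow> G p \<beta> \<in> B \<and> emap (F p \<beta>) (X p) ({x\<in>B. lle \<beta> x \<and> llt x (G p \<beta>)}, m)"
    by metis
  define bs where "bs = rec_nat \<beta>0 (\<lambda>p b. G p b)"
  have bs0: "bs 0 = \<beta>0" and bsS: "\<And>p. bs (Suc p) = G p (bs p)" by (simp_all add: bs_def)
  have bsB: "bs p \<in> B" for p by (induct p) (simp_all add: bs0 bsS b0 GF)
  have em: "emap (F p (bs p)) (X p) ({x\<in>B. lle (bs p) x \<and> llt x (bs (Suc p))}, m)" for p
    using GF[OF bsB[of p]] bsS by simp
  have inc: "llt (bs p) (bs (Suc p))" for p
  proof -
    obtain a where a: "a \<in> fst (X p)" using ne by blast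
    from emapD(1)[OF em a] show ?thesis using lle_llt_trans by auto
  qed
  have mono: "lle (bs (Suc p)) (bs q)" if "p < q" for p q
    using that
  proof (induct q)
    case 0 then show ?case by simp
  next
    case (Suc q)
    show ?case
    proof (cases "p = q")
      case True then show ?thesis by simp
    next
      case False
      with Suc have "lle (bs (Suc p)) (bs q)" by simp
      then show ?thesis using inc[of q] lle_trans llt_imp_lle by blast
    qed
  qed
  have ge0: "lle \<beta>0 (bs p)" for p
  proof (induct p)
    case 0 then show ?case by (simp add: bs0)
  next
    case (Suc p) then show ?case using inc[of p] lle_trans llt_imp_lle by blast
  qed
  define H where "H xs = F (hd xs) (bs (hd xs)) (tl xs)" for xs
  have "emap H (sumg X) ({x\<in>B. lle \<beta>0 x}, m)"
  proof (rule emapI)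
    fix i assume "i \<in> fst (sumg X)"
    then obtain p a where i: "i = p # a" "a \<in> fst (X p)" by (auto simp: mem_sumg)
    have "H i \<in> B \<and> lle (bs p) (H i)" using emapD(1)[OF em i(2)] by (simp add: H_def i)
    then show "H i \<in> fst ({x\<in>B. lle \<beta>0 x}, m)" using ge0 lle_trans by auto
    show "snd (sumg X) i \<le> snd ({x\<in>B. lle \<beta>0 x}, m) (H i)"
      using emapD(2)[OF em i(2)] by (simp add: H_def i)
  next
    fix i j assume "i \<in> fst (sumg X)" "j \<in> fst (sumg X)" "llt i j"
    then obtain p a q b where i: "i = p # a" "a \<in> fst (X p)" and j: "j = q # b" "b \<in> fst (X q)"
      by (auto simp: mem_sumg)
    from \<open>llt i j\<close> have "p < q \<or> p = q \<and> llt a b" by (simp add: i j)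
    then show "llt (H i) (H j)"
    proof
      assume pq: "p < q"
      have 1: "llt (H i) (bs (Suc p))" using emapD(1)[OF em i(2)] by (simp add: H_def i)
      have 2: "lle (bs q) (H j)" using emapD(1)[OF em j(2)] by (simp add: H_def j)
      show ?thesis using llt_lle_trans[OF llt_lle_trans[OF 1 mono[OF pq]] 2] .
    next
      assume "p = q \<and> llt a b"
      then show ?thesis using emapD(3)[OF em i(2)] j by (simp add: H_def i)
    qed
  qed
  thus ?thesis unfolding embg_def by blast
qed

lemma brec_indec:
  assumes ind: "indecg S" and om: "embg (omg X) S" and ne: "fst X \<noteq> {}" and b: "\<beta> \<in> fst S"
  shows "\<exists>\<gamma>\<in>fst S. embg X ({x\<in>fst S. lle \<beta> x \<and> llt x \<gamma>}, snd S)"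
proof -
  obtain g where g: "emap g S (tailg S \<beta>)" using ind b unfolding indecg_def embg_def by blast
  obtain f where f: "emap f (omg X) S" using om unfolding embg_def by blast
  obtain a0 where a0: "a0 \<in> fst X" using ne by blast
  define \<gamma> where "\<gamma> = g (f (1 # a0))"
  have "1 # a0 \<in> fst (omg X)" using a0 by simp
  hence fa: "f (1#a0) \<in> fst S" by (rule emapD(1)[OF f])
  hence "\<gamma> \<in> fst (tailg S \<beta>)" unfolding \<gamma>_def by (rule emapD(1)[OF g])
  hence \<gamma>S: "\<gamma> \<in> fst S" by simp
  have "emap (\<lambda>a. g (f (0 # a))) X ({x\<in>fst S. lle \<beta> x \<and> llt x \<gamma>}, snd S)"
  proof (rule emapI)
    fix i assume i: "i \<in> fst X"
    have fi: "f (0#i) \<in> fst S" using emapD(1)[OF f] i by simp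
    have gi: "g (f (0#i)) \<in> fst (tailg S \<beta>)" using emapD(1)[OF g fi] .
    have "llt (f (0#i)) (f (1#a0))" using emapD(3)[OF f] i a0 by simp
    hence "llt (g (f (0#i))) \<gamma>" unfolding \<gamma>_def using emapD(3)[OF g fi fa] by simp
    with gi show "g (f (0#i)) \<in> fst ({x\<in>fst S. lle \<beta> x \<and> llt x \<gamma>}, snd S)" by simp
    show "snd X i \<le> snd ({x\<in>fst S. lle \<beta> x \<and> llt x \<gamma>}, snd S) (g (f (0 # i)))"
      using emapD(2)[OF f, of "0#i"] emapD(2)[OF g fi] i by (auto intro: order_trans)
  next
    fix i j assume "i \<in> fst X" "j \<in> fst X" "llt i j"
    then show "llt (g (f (0#i))) (g (f (0#j)))"
      using emapD(3)[OF f, of "0#i" "0#j"] emapD(3)[OF g] emapD(1)[OF f] by simp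
  qed
  with \<gamma>S show ?thesis unfolding embg_def by blast
qed

lemma omg_catg_sum:
  assumes "L \<noteq> []"
  shows "embg (omg (catg L)) (sumg (\<lambda>p. L ! (p mod length L)))"
proof -
  define n where "n = length L"
  define h where "h xs = (hd xs * n + hd (tl xs)) # tl (tl xs)" for xs
  have "emap h (omg (catg L)) (sumg (\<lambda>p. L ! (p mod length L)))"
  proof (rule emapI)
    fix i assume "i \<in> fst (omg (catg L))"
    then obtain c w a where i: "i = c # w # a" "w < length L" "a \<in> fst (L!w)" by (auto simp: mem_omg mem_catg)
    show "h i \<in> fst (sumg (\<lambda>p. L ! (p mod length L)))" using i by (simp add: h_def n_def)
    show "snd (omg (catg L)) i \<le> snd (sumg (\<lambda>p. L ! (p mod length L))) (h i)"
      using i by (simp add: h_def n_def)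
  next
    fix i j assume "i \<in> fst (omg (catg L))" "j \<in> fst (omg (catg L))" "llt i j"
    then obtain c w a c' w' a' where i: "i = c # w # a" "w < n" and j: "j = c' # w' # a'" "w' < n"
      by (auto simp: mem_omg mem_catg n_def)
    then show "llt (h i) (h j)" using \<open>llt i j\<close> key_less[OF i(2) j(2), of c c'] by (auto simp: h_def)
  qed
  thus ?thesis unfolding embg_def by blast
qed

lemma omglist:
  assumes ind: "indecg S" and b0: "\<beta>0 \<in> fst S"
    and H: "\<And>X. X \<in> set L \<Longrightarrow> fst X \<noteq> {} \<and> embg (omg X) S"
  shows "embg (omg (catg L)) S"
proof (cases "L = []")
  case True then have "fst (omg (catg L)) = {}" by (auto simp: mem_omg mem_catg)
  then show ?thesis unfolding embg_def using emap_empty by blast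
next
  case False
  let ?X = "\<lambda>p. L ! (p mod length L)"
  have Xin: "?X p \<in> set L" for p using False by simp
  have "embg (sumg ?X) ({x\<in>fst S. lle \<beta>0 x}, snd S)"
  proof (rule ASM[where B = "fst S"])
    show "fst (?X p) \<noteq> {}" for p using H Xin by blast
    show "\<beta>0 \<in> fst S" by (rule b0)
    fix p \<beta> assume "\<beta> \<in> fst S"
    then show "\<exists>\<gamma>\<in>fst S. embg (?X p) ({x \<in> fst S. lle \<beta> x \<and> llt x \<gamma>}, snd S)"
      using brec_indec[OF ind] H Xin by blast
  qed
  moreover have "embg ({x\<in>fst S. lle \<beta>0 x}, snd S) S" by (rule embg_sub) auto
  ultimately show ?thesis using omg_catg_sum[OF False] embg_trans by blast
qed

lemma omg_catg_mono:
  assumes H: "\<And>X. X \<in> set W \<Longrightarrow> \<exists>Y\<in>set L. embg X Y"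
  shows "embg (omg (catg W)) (omg (catg L))"
proof -
  have "\<forall>w. \<exists>k f. w < length W \<longrightarrow> k < length L \<and> emap f (W!w) (L!k)"
    using H unfolding embg_def by (metis in_set_conv_nth nth_mem)
  then obtain K F where KF: "\<And>w. w < length W \<Longrightarrow> K w < length L \<and> emap (F w) (W!w) (L!(K w))"
    by metis
  define n where "n = length W"
  define h where "h xs = (hd xs * n + hd (tl xs)) # K (hd (tl xs)) # F (hd (tl xs)) (tl (tl xs))" for xs
  have "emap h (omg (catg W)) (omg (catg L))"
  proof (rule emapI)
    fix i assume "i \<in> fst (omg (catg W))"
    then obtain c w a where i: "i = c # w # a" "w < length W" "a \<in> fst (W!w)" by (auto simp: mem_omg mem_catg)
    show "h i \<in> fst (omg (catg L))" using KF[OF i(2)] emapD(1)[OF conjunct2[OF KF[OF i(2)]] i(3)] i by (simp add: h_def)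
    show "snd (omg (catg W)) i \<le> snd (omg (catg L)) (h i)" using emapD(2)[OF conjunct2[OF KF[OF i(2)]] i(3)] i by (simp add: h_def)
  next
    fix i j assume ij: "i \<in> fst (omg (catg W))" "j \<in> fst (omg (catg W))" "llt i j"
    then obtain c w a c' w' a' where i: "i = c # w # a" "w < n" "a \<in> fst (W!w)"
      and j: "j = c' # w' # a'" "w' < n" "a' \<in> fst (W!w')"
      by (auto simp: mem_omg mem_catg n_def)
    show "llt (h i) (h j)"
    proof (cases "c = c' \<and> w = w'")
      case True
      then have "llt a a'" using ij(3) i j by simp
      then show ?thesis using True i j emapD(3)[OF conjunct2[OF KF]] by (simp add: h_def n_def)
    next
      case False
      then have "c < c' \<or> c = c' \<and> w < w'" using ij(3) i j by auto
      then show ?thesis using key_less[OF i(2) j(2)] False i j by (simp add: h_def)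
    qed
  qed
  thus ?thesis unfolding embg_def by blast
qed

lemma catg_mono_pointwise:
  assumes len: "length L = length L'" and H: "\<And>i. i < length L \<Longrightarrow> embg (L!i) (L'!i)"
  shows "embg (catg L) (catg L')"
proof -
  obtain F where F: "\<And>i. i < length L \<Longrightarrow> emap (F i) (L!i) (L'!i)"
    using H unfolding embg_def by metis
  define h where "h xs = hd xs # F (hd xs) (tl xs)" for xs
  have "emap h (catg L) (catg L')"
  proof (rule emapI)
    fix i assume "i \<in> fst (catg L)"
    then obtain w a where i: "i = w # a" "w < length L" "a \<in> fst (L!w)" by (auto simp: mem_catg)
    show "h i \<in> fst (catg L')" using F[OF i(2)] emapD(1)[OF F[OF i(2)] i(3)] i len by (simp add: h_def)
    show "snd (catg L) i \<le> snd (catg L') (h i)" using emapD(2)[OF F[OF i(2)] i(3)] i by (simp add: h_def)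
  next
    fix i j assume ij: "i \<in> fst (catg L)" "j \<in> fst (catg L)" "llt i j"
    then obtain w a w' a' where i: "i = w # a" "w < length L" "a \<in> fst (L!w)"
      and j: "j = w' # a'" "w' < length L" "a' \<in> fst (L!w')"
      by (auto simp: mem_catg)
    show "llt (h i) (h j)"
      using ij(3) i j emapD(3)[OF F[OF i(2)]] by (auto simp: h_def)
  qed
  thus ?thesis unfolding embg_def by blast
qed

lemma sumcov:
  assumes cov: "\<And>p. embg (X p) (catg (Ws p))"
    and H: "\<And>p Z. Z \<in> set (Ws p) \<Longrightarrow> \<exists>Y\<in>set L. embg Z Y"
  shows "embg (sumg X) (omg (catg L))"
proof -
  obtain g where g: "\<And>p. emap (g p) (X p) (catg (Ws p))" using cov unfolding embg_def by metis
  have "\<forall>p w. \<exists>k f. w < length (Ws p) \<longrightarrow> k < length L \<and> emap f (Ws p ! w) (L!k)"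
    using H unfolding embg_def by (metis in_set_conv_nth nth_mem)
  then obtain K F where KF: "\<And>p w. w < length (Ws p) \<Longrightarrow> K p w < length L \<and> emap (F p w) (Ws p ! w) (L!(K p w))"
    by metis
  define Off where "Off p = (\<Sum>q<p. length (Ws q))" for p
  have Omono: "Off (Suc p) \<le> Off q" if "p < q" for p q
    unfolding Off_def using that by (intro sum_mono2) auto
  have OS: "Off (Suc p) = Off p + length (Ws p)" for p by (simp add: Off_def)
  define h where "h xs = (let p = hd xs; y = g p (tl xs); w = hd y in (Off p + w) # K p w # F p w (tl y))" for xs
  have gm: "g p a \<in> fst (catg (Ws p))" if "a \<in> fst (X p)" for p a using emapD(1)[OF g that] .
  have "emap h (sumg X) (omg (catg L))"
  proof (rule emapI)
    fix i assume "i \<in> fst (sumg X)"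
    then obtain p a where i: "i = p # a" "a \<in> fst (X p)" by (auto simp: mem_sumg)
    obtain w b where y: "g p a = w # b" "w < length (Ws p)" "b \<in> fst (Ws p ! w)"
      using gm[OF i(2)] by (auto simp: mem_catg)
    show "h i \<in> fst (omg (catg L))" using KF[OF y(2)] emapD(1)[OF conjunct2[OF KF[OF y(2)]] y(3)] y i by (simp add: h_def)
    have "snd (X p) a \<le> snd (Ws p ! w) b" using emapD(2)[OF g i(2)] y by simp
    also have "\<dots> \<le> snd (L ! K p w) (F p w b)" using emapD(2)[OF conjunct2[OF KF[OF y(2)]] y(3)] .
    finally show "snd (sumg X) i \<le> snd (omg (catg L)) (h i)" using i y by (simp add: h_def)
  next
    fix i j assume ij: "i \<in> fst (sumg X)" "j \<in> fst (sumg X)" "llt i j"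
    then obtain p a q a' where i: "i = p # a" "a \<in> fst (X p)" and j: "j = q # a'" "a' \<in> fst (X q)"
      by (auto simp: mem_sumg)
    obtain w b where y: "g p a = w # b" "w < length (Ws p)" "b \<in> fst (Ws p ! w)"
      using gm[OF i(2)] by (auto simp: mem_catg)
    obtain w' b' where y': "g q a' = w' # b'" "w' < length (Ws q)" "b' \<in> fst (Ws q ! w')"
      using gm[OF j(2)] by (auto simp: mem_catg)
    from ij(3) have "p < q \<or> p = q \<and> llt a a'" using i j by simp
    then show "llt (h i) (h j)"
    proof
      assume pq: "p < q"
      have "Off p + w < Off q + w'" using Omono[OF pq] OS[of p] y(2) by linarith
      then show ?thesis using i j y y' by (simp add: h_def)
    next
      assume pq: "p = q \<and> llt a a'"
      then have "llt (g p a) (g p a')" using emapD(3)[OF g i(2)] j by simp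
      then have "w < w' \<or> w = w' \<and> llt b b'" using y y' pq by simp
      then show ?thesis
      proof
        assume "w < w'" then show ?thesis using i j y y' pq by (simp add: h_def)
      next
        assume "w = w' \<and> llt b b'"
        then show ?thesis using i j y y' pq emapD(3)[OF conjunct2[OF KF[OF y(2)]]] by (simp add: h_def)
      qed
    qed
  qed
  thus ?thesis unfolding embg_def by blast
qed


definition lof :: "'a fset \<Rightarrow> 'a list" where
  "lof S = (SOME xs. set xs = fset S)"

lemma set_lof[simp]: "set (lof S) = fset S"
  unfolding lof_def by (rule someI_ex) (rule finite_list, simp)

primrec canon :: "'q ftree \<Rightarrow> 'q gs" where
  "canon (Leaf x) = ({[]}, \<lambda>_. x)"
| "canon (Node ts) = omg (catg (lof (fimage canon ts)))"

lemma in_lof_canon: "t |\<in>| ts \<Longrightarrow> \<exists>i < length (lof (fimage canon ts)). lof (fimage canon ts) ! i = canon t"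
proof -
  assume "t |\<in>| ts"
  hence "canon t \<in> set (lof (fimage canon ts))" by simp
  thus ?thesis by (metis in_set_conv_nth)
qed

lemma lof_canon_nth: "i < length (lof (fimage canon ts)) \<Longrightarrow> \<exists>t. t |\<in>| ts \<and> lof (fimage canon ts) ! i = canon t"
proof -
  assume "i < length (lof (fimage canon ts))"
  hence "lof (fimage canon ts) ! i \<in> fset (fimage canon ts)" using nth_mem set_lof by metis
  thus ?thesis by auto
qed

lemma tree_wf_Node: "tree_wf (Node ts) \<Longrightarrow> ts \<noteq> {||} \<and> (\<forall>t. t |\<in>| ts \<longrightarrow> tree_wf t)"
  by (erule tree_wf.cases) auto

lemma canon_ne: "tree_wf t \<Longrightarrow> fst (canon t) \<noteq> {}"
proof (induct rule: tree_wf.induct)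
  case (1 x) then show ?case by simp
next
  case (2 ts)
  then obtain t where t: "t |\<in>| ts" by blast
  with 2 obtain a where a: "a \<in> fst (canon t)" by blast
  obtain i where i: "i < length (lof (fimage canon ts))" "lof (fimage canon ts) ! i = canon t"
    using in_lof_canon[OF t] by blast
  have "0 # i # a \<in> fst (canon (Node ts))" using i a by simp
  thus ?case by blast
qed

lemma indecg_canon: "indecg (canon t)"
proof (cases t)
  case (Leaf x)
  show ?thesis unfolding indecg_def
  proof
    fix d assume "d \<in> fst (canon t)"
    hence "d = []" by (simp add: Leaf)
    thus "embg (canon t) (tailg (canon t) d)" by (intro embg_sub) (auto simp: Leaf)
  qed
next
  case (Node ts) then show ?thesis by (simp add: indecg_omg)
qed

lemma embg_leaf: "embg (canon (Leaf x)) Y \<longleftrightarrow> (\<exists>y\<in>fst Y. x \<le> snd Y y)"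
proof
  assume "embg (canon (Leaf x)) Y"
  then obtain f where f: "emap f (canon (Leaf x)) Y" unfolding embg_def by blast
  show "\<exists>y\<in>fst Y. x \<le> snd Y y" using emapD(1,2)[OF f, of "[]"] by auto
next
  assume "\<exists>y\<in>fst Y. x \<le> snd Y y"
  then obtain y where y: "y \<in> fst Y" "x \<le> snd Y y" by blast
  have "emap (\<lambda>_. y) (canon (Leaf x)) Y" by (rule emapI) (auto simp: y)
  thus "embg (canon (Leaf x)) Y" unfolding embg_def by blast
qed

lemma embg_leaf'[simp]: "embg ({[]}, \<lambda>_. x) Y \<longleftrightarrow> (\<exists>y\<in>fst Y. x \<le> snd Y y)"
  using embg_leaf[of x Y] by simp

lemma le_T_canon: "le_T s t \<Longrightarrow> embg (canon s) (canon t)"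
proof (induct rule: le_T.induct)
  case (leaf_leaf x y) then show ?case by (simp add: embg_leaf)
next
  case (leaf_node t ts x)
  then obtain y where y: "y \<in> fst (canon t)" "x \<le> snd (canon t) y" by (auto simp: embg_leaf)
  obtain i where i: "i < length (lof (fimage canon ts))" "lof (fimage canon ts) ! i = canon t"
    using in_lof_canon[OF leaf_node(1)] by blast
  have m: "0 # i # y \<in> fst (canon (Node ts))" "snd (canon (Node ts)) (0 # i # y) = snd (canon t) y"
    using i y by simp_all
  have "\<exists>z\<in>fst (canon (Node ts)). x \<le> snd (canon (Node ts)) z" using m y(2) by metis
  thus ?case by (simp only: embg_leaf)
next
  case (node_node ss ts)
  show ?case unfolding canon.simps
  proof (rule omg_catg_mono)
    fix X assume "X \<in> set (lof (fimage canon ss))"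
    then obtain s where s: "s |\<in>| ss" "X = canon s" by auto
    with node_node obtain t where "t |\<in>| ts" "embg (canon s) (canon t)" by blast
    thus "\<exists>Y\<in>set (lof (fimage canon ts)). embg X Y" using s by auto
  qed
qed

lemma indec_sub_omg_catg:
  assumes f: "emap f (omg (catg L)) (omg (catg L'))"
    and XL: "X \<in> set L" and ne: "fst X \<noteq> {}" and ind: "indecg X"
  shows "\<exists>Y\<in>set L'. embg X Y"
proof -
  obtain i where i: "i < length L" "L ! i = X" using XL by (auto simp: in_set_conv_nth)
  obtain a0 where a0: "a0 \<in> fst X" using ne by blast
  define n where "n = length L'"
  define key where "key xs = hd xs * n + hd (tl xs)" for xs :: "nat list"
  have memX: "c # i # a \<in> fst (omg (catg L))" if "a \<in> fst X" for a c using i that by simp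
  have dec: "\<exists>c j b. y = c # j # b \<and> j < n \<and> b \<in> fst (L' ! j)" if "y \<in> fst (omg (catg L'))" for y
    using that by (auto simp: mem_omg mem_catg n_def)
  have keymono: "key y \<le> key y'" if yM: "y \<in> fst (omg (catg L'))" and yM': "y' \<in> fst (omg (catg L'))" and yy: "lle y y'" for y y'
  proof -
    obtain c j b where y: "y = c # j # b" "j < n" using dec[OF yM] by blast
    obtain c' j' b' where y': "y' = c' # j' # b'" "j' < n" using dec[OF yM'] by blast
    have "c < c' \<or> c = c' \<and> j < j' \<or> c = c' \<and> j = j'" using yy y y' by (auto simp: lle_def)
    thus ?thesis using key_less[OF y(2) y'(2), of c c'] y y' by (auto simp: key_def)
  qed
  define e where "e = f (1 # i # a0)"
  have eM: "e \<in> fst (omg (catg L'))" unfolding e_def by (rule emapD(1)[OF f memX[OF a0]])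
  have fM: "f (0 # i # a) \<in> fst (omg (catg L'))" if "a \<in> fst X" for a by (rule emapD(1)[OF f memX[OF that]])
  have bound: "key (f (0#i#a)) \<le> key e" if "a \<in> fst X" for a
  proof -
    have "llt (f (0#i#a)) e" unfolding e_def by (rule emapD(3)[OF f memX[OF that] memX[OF a0]]) simp
    thus ?thesis using keymono[OF fM[OF that] eM] by (simp add: lle_def)
  qed
  define Ks where "Ks = (\<lambda>a. key (f (0#i#a))) ` fst X"
  have finKs: "finite Ks"
    by (rule finite_subset[of _ "{..key e}"]) (auto simp: Ks_def bound)
  have neKs: "Ks \<noteq> {}" using ne by (simp add: Ks_def)
  define M where "M = Max Ks"
  obtain as where as: "as \<in> fst X" "key (f (0#i#as)) = M"
    using Max_in[OF finKs neKs] unfolding M_def Ks_def by auto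
  have const: "key (f (0#i#a)) = M" if "a \<in> fst X" "lle as a" for a
  proof -
    have "lle (f (0#i#as)) (f (0#i#a))"
      by (rule emap_lle[OF f memX[OF as(1)] memX[OF that(1)]]) (use that in \<open>auto simp: lle_def\<close>)
    hence "M \<le> key (f (0#i#a))" using keymono[OF fM[OF as(1)] fM[OF that(1)]] as by simp
    moreover have "key (f (0#i#a)) \<le> M" unfolding M_def using finKs that(1) by (auto simp: Ks_def)
    ultimately show ?thesis by simp
  qed
  obtain c0 j0 b0 where y0: "f (0#i#as) = c0 # j0 # b0" "j0 < n" using dec[OF fM[OF as(1)]] by blast
  have hd2: "\<exists>b. f (0#i#a) = c0 # j0 # b \<and> b \<in> fst (L' ! j0)" if aX: "a \<in> fst X" and aa: "lle as a" for a
  proof -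
    obtain c j b where y: "f (0#i#a) = c # j # b" "j < n" "b \<in> fst (L' ! j)" using dec[OF fM[OF aX]] by blast
    have "c * n + j = c0 * n + j0" using const[OF aX aa] as(2) y y0 by (simp add: key_def)
    hence "c = c0 \<and> j = j0" using key_eq[OF y(2) y0(2)] by simp
    thus ?thesis using y by auto
  qed
  obtain g where g: "emap g X (tailg X as)" using ind as(1) unfolding indecg_def embg_def by blast
  have gX: "g a \<in> fst X \<and> lle as (g a)" if "a \<in> fst X" for a using emapD(1)[OF g that] by simp
  define h where "h a = tl (tl (f (0 # i # g a)))" for a
  have "emap h X (L' ! j0)"
  proof (rule emapI)
    fix a assume a: "a \<in> fst X"
    obtain b where b: "f (0#i#g a) = c0 # j0 # b" "b \<in> fst (L' ! j0)" using hd2 gX[OF a] by blast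
    show "h a \<in> fst (L' ! j0)" using b by (simp add: h_def)
    have "snd X a \<le> snd X (g a)" using emapD(2)[OF g a] by simp
    also have "\<dots> \<le> snd (omg (catg L')) (f (0#i#g a))"
      using emapD(2)[OF f memX[OF conjunct1[OF gX[OF a]]]] i by simp
    finally show "snd X a \<le> snd (L' ! j0) (h a)" using b by (simp add: h_def)
  next
    fix a a' assume a: "a \<in> fst X" and a': "a' \<in> fst X" and aa: "llt a a'"
    obtain b where b: "f (0#i#g a) = c0 # j0 # b" using hd2 gX[OF a] by blast
    obtain b' where b': "f (0#i#g a') = c0 # j0 # b'" using hd2 gX[OF a'] by blast
    have "llt (g a) (g a')" using emapD(3)[OF g a a' aa] .
    hence "llt (f (0#i#g a)) (f (0#i#g a'))"
      using emapD(3)[OF f memX[OF conjunct1[OF gX[OF a]]] memX[OF conjunct1[OF gX[OF a']]]] by simp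
    thus "llt (h a) (h a')" using b b' by (simp add: h_def)
  qed
  moreover have "L' ! j0 \<in> set L'" using y0(2) by (simp add: n_def)
  ultimately show ?thesis unfolding embg_def by blast
qed

lemma leaf_canon_le: "embg (canon (Leaf x)) (canon t) \<Longrightarrow> le_T (Leaf x) t"
proof (induct t)
  case (Leaf y) then show ?case by (auto simp: embg_leaf intro: le_T.intros)
next
  case (Node ts)
  then obtain y where y: "y \<in> fst (canon (Node ts))" "x \<le> snd (canon (Node ts)) y" by (auto simp: embg_leaf)
  then obtain c i a where yy: "y = c # i # a" "i < length (lof (fimage canon ts))" "a \<in> fst (lof (fimage canon ts) ! i)"
    by (auto simp: mem_omg mem_catg)
  obtain t where t: "t |\<in>| ts" "lof (fimage canon ts) ! i = canon t" using lof_canon_nth[OF yy(2)] by blast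
  have "embg (canon (Leaf x)) (canon t)" using y yy t by (auto simp: embg_leaf)
  hence "le_T (Leaf x) t" using Node t by blast
  thus ?case using t by (blast intro: le_T.intros)
qed

lemma canon_le_T: "tree_wf s \<Longrightarrow> tree_wf t \<Longrightarrow> embg (canon s) (canon t) \<Longrightarrow> le_T s t"
proof (induct s arbitrary: t rule: tree_wf.induct)
  case (1 x) then show ?case using leaf_canon_le by blast
next
  case (2 ss)
  obtain s0 where s0: "s0 |\<in>| ss" using 2(1) by blast
  obtain a where a: "a \<in> fst (canon s0)" using 2(2) s0 canon_ne by blast
  obtain i where i: "i < length (lof (fimage canon ss))" "lof (fimage canon ss) ! i = canon s0"
    using in_lof_canon[OF s0] by blast
  obtain f where f: "emap f (canon (Node ss)) (canon t)" using 2(4) unfolding embg_def by blast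
  show ?case
  proof (cases t)
    case (Leaf y)
    have m0: "0 # i # a \<in> fst (canon (Node ss))" and m1: "1 # i # a \<in> fst (canon (Node ss))" using i a by simp_all
    have "f (0#i#a) = f (1#i#a)" using emapD(1)[OF f m0] emapD(1)[OF f m1] by (simp add: Leaf)
    hence "0 # i # a = 1 # i # a" by (rule emap_inj[OF f m0 m1])
    thus ?thesis by simp
  next
    case (Node ts)
    have wts: "\<forall>t'. t' |\<in>| ts \<longrightarrow> tree_wf t'" using 2(3) Node tree_wf_Node by blast
    have "\<forall>s. s |\<in>| ss \<longrightarrow> (\<exists>t'. t' |\<in>| ts \<and> le_T s t')"
    proof (intro allI impI)
      fix s assume s: "s |\<in>| ss"
      have f': "emap f (omg (catg (lof (fimage canon ss)))) (omg (catg (lof (fimage canon ts))))"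
        using f Node by simp
      have "\<exists>Y\<in>set (lof (fimage canon ts)). embg (canon s) Y"
        by (rule indec_sub_omg_catg[OF f']) (use s 2(2) canon_ne indecg_canon in auto)
      then obtain t' where t': "t' |\<in>| ts" "embg (canon s) (canon t')" by auto
      have "le_T s t'" using 2(2) s wts t' by blast
      thus "\<exists>t'. t' |\<in>| ts \<and> le_T s t'" using t' by blast
    qed
    thus ?thesis using Node by (blast intro: le_T.intros)
  qed
qed

lemma canon_le_T_iff: "tree_wf s \<Longrightarrow> tree_wf t \<Longrightarrow> embg (canon s) (canon t) \<longleftrightarrow> le_T s t"
  using canon_le_T le_T_canon by blast


fun TR :: "'q set \<Rightarrow> nat \<Rightarrow> 'q ftree set" where
  "TR R 0 = Leaf ` R"
| "TR R (Suc n) = TR R n \<union> Node ` {S. fset S \<subseteq> TR R n}"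

lemma finite_fsets: "finite X \<Longrightarrow> finite {S. fset S \<subseteq> X}"
proof -
  assume fX: "finite X"
  have "{S. fset S \<subseteq> X} \<subseteq> Abs_fset ` Pow X"
  proof
    fix S assume "S \<in> {S. fset S \<subseteq> X}"
    hence "fset S \<in> Pow X" by simp
    moreover have "S = Abs_fset (fset S)" by (simp add: fset_inverse)
    ultimately show "S \<in> Abs_fset ` Pow X" by blast
  qed
  thus ?thesis using fX by (meson finite_Pow_iff finite_imageI finite_subset)
qed

lemma finite_TR: "finite R \<Longrightarrow> finite (TR R n)"
  by (induct n) (simp_all add: finite_fsets)

lemma TR_mono_n: "h \<le> n \<Longrightarrow> TR R h \<subseteq> TR R n"
proof (induct n)
  case 0 then show ?case by simp
next
  case (Suc n) then show ?case by (cases "h = Suc n") auto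
qed

lemma TR_mono_R: "R \<subseteq> R' \<Longrightarrow> TR R n \<subseteq> TR R' n"
  by (induct n) auto

abbreviation AL :: "nat \<Rightarrow> nat list set" where "AL n \<equiv> {xs. length xs = n}"

definition pl :: "nat \<times> (nat list \<Rightarrow> 'q) \<Rightarrow> 'q gs" where
  "pl P = lev (fst P) (snd P)"

definition blk :: "(nat list \<Rightarrow> 'q) \<Rightarrow> nat \<Rightarrow> nat list \<Rightarrow> 'q" where
  "blk l j = (\<lambda>v. l (j # v))"

definition shf :: "(nat list \<Rightarrow> 'q) \<Rightarrow> nat \<Rightarrow> nat list \<Rightarrow> 'q" where
  "shf l J = (\<lambda>xs. l ((hd xs + J) # tl xs))"

definition brec :: "('q::preorder) gs \<Rightarrow> 'q gs \<Rightarrow> bool" where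
  "brec X S \<longleftrightarrow> (\<forall>\<beta>\<in>fst S. \<exists>\<gamma>\<in>fst S. embg X ({x\<in>fst S. lle \<beta> x \<and> llt x \<gamma>}, snd S))"

lemma fst_pl[simp]: "fst (pl P) = AL (fst P)" by (simp add: pl_def)
lemma snd_pl[simp]: "snd (pl P) = snd P" by (simp add: pl_def)

lemma blk_range: "blk l j ` AL k \<subseteq> l ` AL (Suc k)"
  by (auto simp: blk_def)

lemma shf_range: "shf l J ` AL (Suc k) \<subseteq> l ` AL (Suc k)"
  by (auto simp: shf_def)

lemma lev_ne: "fst (lev n l) \<noteq> {}"
  by (simp add: ex_in_conv[symmetric]) (metis length_replicate)

lemma lev_sumg1: "embg (lev (Suc k) l) (sumg (\<lambda>j. lev k (blk l j)))"
  by (rule embg_sub) (auto simp: mem_sumg blk_def length_Suc_conv)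

lemma lev_sumg2: "embg (sumg (\<lambda>j. lev k (blk l j))) (lev (Suc k) l)"
  by (rule embg_sub) (auto simp: mem_sumg blk_def)

lemma blk_le: "embg (lev k (blk l j)) (lev (Suc k) l)"
proof -
  have "emap (\<lambda>v. j # v) (lev k (blk l j)) (lev (Suc k) l)"
    by (rule emapI) (auto simp: blk_def)
  thus ?thesis unfolding embg_def by blast
qed

lemma shf_le: "embg (lev (Suc k) (shf l J)) (lev (Suc k) l)"
proof -
  have "emap (\<lambda>xs. (hd xs + J) # tl xs) (lev (Suc k) (shf l J)) (lev (Suc k) l)"
  proof (rule emapI)
    fix i j assume "i \<in> fst (lev (Suc k) (shf l J))" "j \<in> fst (lev (Suc k) (shf l J))" "llt i j"
    then show "llt ((hd i + J) # tl i) ((hd j + J) # tl j)"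
      by (cases i; cases j) auto
  qed (auto simp: shf_def)
  thus ?thesis unfolding embg_def by blast
qed

lemma brec_trans: "embg Y X \<Longrightarrow> brec X S \<Longrightarrow> brec Y S"
  unfolding brec_def using embg_trans by blast

lemma asm_const:
  assumes ne: "fst X \<noteq> {}" and br: "brec X S" and b0: "\<beta>0 \<in> fst S"
  shows "embg (omg X) S"
proof -
  have "embg (sumg (\<lambda>_. X)) ({x\<in>fst S. lle \<beta>0 x}, snd S)"
    by (rule ASM) (use ne br b0 in \<open>auto simp: brec_def\<close>)
  moreover have "embg ({x\<in>fst S. lle \<beta>0 x}, snd S) S" by (rule embg_sub) auto
  ultimately show ?thesis unfolding omg_def using embg_trans by blast
qed

lemma brec_of_indec: "indecg S \<Longrightarrow> embg (omg X) S \<Longrightarrow> fst X \<noteq> {} \<Longrightarrow> brec X S"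
  unfolding brec_def using brec_indec by blast

lemma block_brec:
  assumes ind: "indecg (lev (Suc k) l)"
  shows "brec (lev k (blk l j)) (lev (Suc k) l)"
  unfolding brec_def
proof
  fix \<beta> assume b: "\<beta> \<in> fst (lev (Suc k) l)"
  obtain g where g: "emap g (lev (Suc k) l) (tailg (lev (Suc k) l) \<beta>)"
    using ind b unfolding indecg_def embg_def by blast
  define \<gamma> where "\<gamma> = g (Suc j # replicate k 0)"
  have e: "Suc j # replicate k 0 \<in> fst (lev (Suc k) l)" by simp
  have \<gamma>: "\<gamma> \<in> fst (lev (Suc k) l)" using emapD(1)[OF g e] by (simp add: \<gamma>_def)
  have "emap (\<lambda>v. g (j # v)) (lev k (blk l j)) ({x\<in>fst (lev (Suc k) l). lle \<beta> x \<and> llt x \<gamma>}, snd (lev (Suc k) l))"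
  proof (rule emapI)
    fix v assume v: "v \<in> fst (lev k (blk l j))"
    hence jv: "j # v \<in> fst (lev (Suc k) l)" by simp
    have "llt (g (j # v)) \<gamma>" unfolding \<gamma>_def by (rule emapD(3)[OF g jv e]) simp
    thus "g (j # v) \<in> fst ({x\<in>fst (lev (Suc k) l). lle \<beta> x \<and> llt x \<gamma>}, snd (lev (Suc k) l))"
      using emapD(1)[OF g jv] by simp
    show "snd (lev k (blk l j)) v \<le> snd ({x\<in>fst (lev (Suc k) l). lle \<beta> x \<and> llt x \<gamma>}, snd (lev (Suc k) l)) (g (j # v))"
      using emapD(2)[OF g jv] by (simp add: blk_def)
  next
    fix v w assume "v \<in> fst (lev k (blk l j))" "w \<in> fst (lev k (blk l j))" "llt v w"
    then show "llt (g (j # v)) (g (j # w))" using emapD(3)[OF g, of "j#v" "j#w"] by simp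
  qed
  thus "\<exists>\<gamma>\<in>fst (lev (Suc k) l). embg (lev k (blk l j)) ({x\<in>fst (lev (Suc k) l). lle \<beta> x \<and> llt x \<gamma>}, snd (lev (Suc k) l))"
    using \<gamma> unfolding embg_def by blast
qed

definition Gk :: "('q::preorder) itself \<Rightarrow> nat \<Rightarrow> bool" where
  "Gk T k \<longleftrightarrow> (\<forall>l::nat list \<Rightarrow> 'q. finite (l ` AL k) \<longrightarrow> (\<exists>W. (\<forall>P\<in>set W. fst P \<le> k \<and> indecg (pl P) \<and>
      snd P ` AL (fst P) \<subseteq> l ` AL k \<and> embg (pl P) (lev k l)) \<and> embg (lev k l) (catg (map pl W))))"

definition CANONk :: "('q::preorder) itself \<Rightarrow> nat \<Rightarrow> bool" where
  "CANONk T n \<longleftrightarrow> (\<forall>l::nat list \<Rightarrow> 'q. finite (l ` AL n) \<longrightarrow> indecg (lev n l) \<longrightarrow>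
     (\<exists>t. t \<in> TR (l ` AL n) n \<and> tree_wf t \<and> embg (lev n l) (canon t) \<and> embg (canon t) (lev n l)))"

definition cand :: "nat \<Rightarrow> (nat list \<Rightarrow> 'q::preorder) \<Rightarrow> nat \<times> (nat list \<Rightarrow> 'q) \<Rightarrow> bool" where
  "cand n l P \<longleftrightarrow> fst P < n \<and> indecg (pl P) \<and> snd P ` AL (fst P) \<subseteq> l ` AL n \<and> embg (omg (pl P)) (lev n l)"

definition ALk :: "('q::preorder) itself \<Rightarrow> nat \<Rightarrow> bool" where
  "ALk T n \<longleftrightarrow> (\<forall>l::nat list \<Rightarrow> 'q. finite (l ` AL n) \<longrightarrow> indecg (lev n l) \<longrightarrow>
     (\<exists>W. (\<forall>P\<in>set W. cand n l P) \<and> embg (lev n l) (omg (catg (map pl W)))))"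

lemma indecg_lev0: "indecg (lev 0 l)"
  unfolding indecg_def by (auto intro!: embg_sub)

lemma G0: "Gk TYPE('q::preorder) 0"
  unfolding Gk_def
proof (intro allI impI)
  fix l :: "nat list \<Rightarrow> 'q" assume "finite (l ` AL 0)"
  have "emap (\<lambda>xs. 0 # xs) (lev 0 l) (catg (map pl [(0, l)]))"
    by (rule emapI) (auto simp: pl_def)
  hence "embg (lev 0 l) (catg (map pl [(0, l)]))" unfolding embg_def by blast
  moreover have "\<forall>P\<in>set [(0,l)]. fst P \<le> 0 \<and> indecg (pl P) \<and> snd P ` AL (fst P) \<subseteq> l ` AL 0 \<and> embg (pl P) (lev 0 l)"
    by (simp add: pl_def indecg_lev0)
  ultimately show "\<exists>W. (\<forall>P\<in>set W. fst P \<le> 0 \<and> indecg (pl P) \<and> snd P ` AL (fst P) \<subseteq> l ` AL 0 \<and> embg (pl P) (lev 0 l)) \<and>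
      embg (lev 0 l) (catg (map pl W))" by blast
qed

lemma CANON0: "CANONk TYPE('q::preorder) 0"
  unfolding CANONk_def
proof (intro allI impI)
  fix l :: "nat list \<Rightarrow> 'q"
  have "Leaf (l []) \<in> TR (l ` AL 0) 0" by simp
  moreover have "embg (lev 0 l) (canon (Leaf (l [])))" by (rule embg_sub) auto
  moreover have "embg (canon (Leaf (l []))) (lev 0 l)" by (rule embg_sub) auto
  ultimately show "\<exists>t. t \<in> TR (l ` AL 0) 0 \<and> tree_wf t \<and> embg (lev 0 l) (canon t) \<and> embg (canon t) (lev 0 l)"
    by (blast intro: tree_wf.intros)
qed

lemma tree_of_piece:
  assumes C: "\<And>h. h \<le> k \<Longrightarrow> CANONk TYPE('q::preorder) h"
    and fin: "finite R" and hk: "fst P \<le> k" and ind: "indecg (pl P)"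
    and rg: "snd P ` AL (fst P) \<subseteq> R"
  shows "\<exists>t. t \<in> TR R k \<and> tree_wf t \<and> embg (pl P) (canon t) \<and> embg (canon t) (pl (P :: nat \<times> (nat list \<Rightarrow> 'q)))"
proof -
  have "finite (snd P ` AL (fst P))" using fin rg finite_subset by blast
  then obtain t where t: "t \<in> TR (snd P ` AL (fst P)) (fst P)" "tree_wf t"
    "embg (lev (fst P) (snd P)) (canon t)" "embg (canon t) (lev (fst P) (snd P))"
    using C[OF hk] ind unfolding CANONk_def pl_def by blast
  have "t \<in> TR R k" using t(1) TR_mono_R[OF rg] TR_mono_n[OF hk] by blast
  thus ?thesis using t by (auto simp: pl_def)
qed


lemma AL_ne: "AL n \<noteq> {}"
  using lev_ne[of n] by simp

lemma AL_step:
  assumes G: "Gk TYPE('q::preorder) k" and C: "\<And>h. h \<le> k \<Longrightarrow> CANONk TYPE('q) h"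
  shows "ALk TYPE('q) (Suc k)"
  unfolding ALk_def
proof (intro allI impI)
  fix l :: "nat list \<Rightarrow> 'q"
  assume fin: "finite (l ` AL (Suc k))" and ind: "indecg (lev (Suc k) l)"
  define R where "R = l ` AL (Suc k)"
  have finb: "finite (blk l j ` AL k)" for j by (rule finite_subset[OF blk_range fin])
  have "\<forall>j. \<exists>W. (\<forall>P\<in>set W. fst P \<le> k \<and> indecg (pl P) \<and> snd P ` AL (fst P) \<subseteq> blk l j ` AL k \<and> embg (pl P) (lev k (blk l j))) \<and> embg (lev k (blk l j)) (catg (map pl W))"
    using G finb unfolding Gk_def by blast
  then obtain Wf where Wf: "\<And>j. (\<forall>P\<in>set (Wf j). fst P \<le> k \<and> indecg (pl P) \<and> snd P ` AL (fst P) \<subseteq> blk l j ` AL k \<and> embg (pl P) (lev k (blk l j))) \<and> embg (lev k (blk l j)) (catg (map pl (Wf j)))"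
    by metis
  have piece: "fst P \<le> k" "indecg (pl P)" "snd P ` AL (fst P) \<subseteq> R" "embg (pl P) (lev k (blk l j))" if "P \<in> set (Wf j)" for P j
    using Wf[of j] that blk_range[of l j k] unfolding R_def by blast+
  have tr: "\<exists>t. t \<in> TR R k \<and> tree_wf t \<and> embg (pl P) (canon t) \<and> embg (canon t) (pl P)" if "P \<in> set (Wf j)" for P j
    by (rule tree_of_piece[OF C]) (use fin piece[OF that] in \<open>auto simp: R_def\<close>)
  define Tall where "Tall = {t \<in> TR R k. \<exists>j. \<exists>P\<in>set (Wf j). embg (pl P) (canon t) \<and> embg (canon t) (pl P)}"
  have finR: "finite R" using fin by (simp add: R_def)
  have "Tall \<subseteq> TR R k" unfolding Tall_def by blast
  hence finT: "finite Tall" using finite_subset finite_TR[OF finR] by blast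
  define rep where "rep t = (SOME P. \<exists>j. P \<in> set (Wf j) \<and> embg (pl P) (canon t) \<and> embg (canon t) (pl P))" for t
  have rep: "\<exists>j. rep t \<in> set (Wf j) \<and> embg (pl (rep t)) (canon t) \<and> embg (canon t) (pl (rep t))" if "t \<in> Tall" for t
    unfolding rep_def by (rule someI_ex) (use that in \<open>auto simp: Tall_def\<close>)
  obtain ts where ts: "set ts = Tall" using finite_list[OF finT] by blast
  define W where "W = map rep ts"
  have cand: "cand (Suc k) l P" if PW: "P \<in> set W" for P
  proof -
    obtain t where t: "t \<in> Tall" "P = rep t" using PW ts by (auto simp: W_def)
    obtain j where j: "P \<in> set (Wf j)" using rep[OF t(1)] t(2) by blast
    have "brec (lev k (blk l j)) (lev (Suc k) l)" by (rule block_brec[OF ind])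
    hence "brec (pl P) (lev (Suc k) l)" using brec_trans piece(4)[OF j] by blast
    hence "embg (omg (pl P)) (lev (Suc k) l)"
      by (intro asm_const[of _ _ "replicate (Suc k) 0"]) (auto intro: exI[of _ "replicate (fst P) 0"])
    thus ?thesis using piece[OF j] unfolding cand_def R_def by auto
  qed
  have "embg (sumg (\<lambda>j. lev k (blk l j))) (omg (catg (map pl W)))"
  proof (rule sumcov)
    show "embg (lev k (blk l j)) (catg (map pl (Wf j)))" for j using Wf by blast
    fix j Z assume "Z \<in> set (map pl (Wf j))"
    then obtain P where P: "P \<in> set (Wf j)" "Z = pl P" by auto
    obtain t where t: "t \<in> TR R k" "tree_wf t" "embg (pl P) (canon t)" "embg (canon t) (pl P)" using tr[OF P(1)] by blast
    have tT: "t \<in> Tall" unfolding Tall_def using t P(1) by blast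
    obtain j' where "rep t \<in> set (Wf j')" "embg (canon t) (pl (rep t))" using rep[OF tT] by blast
    moreover have "rep t \<in> set W" using tT ts by (simp add: W_def)
    ultimately show "\<exists>Y\<in>set (map pl W). embg Z Y" using t(3) P(2) embg_trans by (metis image_eqI set_map)
  qed
  hence "embg (lev (Suc k) l) (omg (catg (map pl W)))" using lev_sumg1 embg_trans by blast
  thus "\<exists>W. (\<forall>P\<in>set W. cand (Suc k) l P) \<and> embg (lev (Suc k) l) (omg (catg (map pl W)))" using cand by blast
qed

lemma CANON_step:
  assumes A: "ALk TYPE('q::preorder) (Suc k)" and C: "\<And>h. h \<le> k \<Longrightarrow> CANONk TYPE('q) h"
  shows "CANONk TYPE('q) (Suc k)"
  unfolding CANONk_def
proof (intro allI impI)
  fix l :: "nat list \<Rightarrow> 'q"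
  assume fin: "finite (l ` AL (Suc k))" and ind: "indecg (lev (Suc k) l)"
  define R where "R = l ` AL (Suc k)"
  define \<sigma> where "\<sigma> = lev (Suc k) l"
  obtain W where W: "\<And>P. P \<in> set W \<Longrightarrow> cand (Suc k) l P" and sW: "embg \<sigma> (omg (catg (map pl W)))"
    using A fin ind unfolding ALk_def \<sigma>_def by blast
  have tr: "\<exists>t. t \<in> TR R k \<and> tree_wf t \<and> embg (pl P) (canon t) \<and> embg (canon t) (pl P)" if "P \<in> set W" for P
    using W[OF that] by (intro tree_of_piece[OF C]) (auto simp: cand_def R_def fin)
  define AA where "AA = {t \<in> TR R k. tree_wf t \<and> embg (omg (canon t)) \<sigma>}"
  have finR: "finite R" using fin by (simp add: R_def)
  have "AA \<subseteq> TR R k" unfolding AA_def by blast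
  hence finA: "finite AA" using finite_subset finite_TR[OF finR] by blast
  define T where "T = Node (Abs_fset AA)"
  have fA: "fset (Abs_fset AA) = AA" using finA by (simp add: Abs_fset_inverse)
  have inA: "\<exists>t\<in>AA. embg (pl P) (canon t)" if PW: "P \<in> set W" for P
  proof -
    obtain t where t: "t \<in> TR R k" "tree_wf t" "embg (pl P) (canon t)" "embg (canon t) (pl P)" using tr[OF PW] by blast
    have "embg (omg (canon t)) (omg (pl P))" using omg_mono t(4) by blast
    moreover have "embg (omg (pl P)) \<sigma>" using W[OF PW] by (simp add: cand_def \<sigma>_def)
    ultimately have "t \<in> AA" using t unfolding AA_def using embg_trans by blast
    thus ?thesis using t(3) by blast
  qed
  have Wne: "W \<noteq> []"
  proof
    assume "W = []"
    then have "fst (omg (catg (map pl W))) = {}" by (auto simp: mem_omg mem_catg)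
    moreover obtain x where "x \<in> fst \<sigma>" using lev_ne unfolding \<sigma>_def by blast
    ultimately show False using sW unfolding embg_def emap_def by blast
  qed
  then obtain P0 where P0: "P0 \<in> set W" by (cases W) auto
  have Ane: "AA \<noteq> {}" using inA[OF P0] by blast
  have wf: "tree_wf T" unfolding T_def
  proof (rule tree_wf.intros)
    show "Abs_fset AA \<noteq> {||}" using Ane fA by auto
    show "\<forall>t. t |\<in>| Abs_fset AA \<longrightarrow> tree_wf t" using fA by (auto simp: AA_def)
  qed
  have TR: "T \<in> TR R (Suc k)" unfolding T_def using fA by (auto simp: AA_def)
  have cT: "canon T = omg (catg (lof (fimage canon (Abs_fset AA))))" by (simp add: T_def)
  have setL: "set (lof (fimage canon (Abs_fset AA))) = canon ` AA" using fA by simp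
  have "embg \<sigma> (canon T)"
  proof -
    have "embg (omg (catg (map pl W))) (canon T)" unfolding cT
      by (rule omg_catg_mono) (use inA setL in auto)
    thus ?thesis using sW embg_trans by blast
  qed
  moreover have "embg (canon T) \<sigma>" unfolding cT
  proof (rule omglist[of _ "replicate (Suc k) 0"])
    show "indecg \<sigma>" using ind by (simp add: \<sigma>_def)
    show "replicate (Suc k) 0 \<in> fst \<sigma>" by (simp add: \<sigma>_def)
    fix X assume "X \<in> set (lof (fimage canon (Abs_fset AA)))"
    then obtain t where "t \<in> AA" "X = canon t" using setL by auto
    thus "fst X \<noteq> {} \<and> embg (omg X) \<sigma>" using canon_ne unfolding AA_def by auto
  qed
  ultimately show "\<exists>t. t \<in> TR (l ` AL (Suc k)) (Suc k) \<and> tree_wf t \<and> embg (lev (Suc k) l) (canon t) \<and> embg (canon t) (lev (Suc k) l)"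
    using wf TR unfolding \<sigma>_def R_def by blast
qed


lemma cat_split_first:
  assumes "embg (lev k (blk m 0)) (catg B)"
  shows "embg (lev (Suc k) m) (catg (B @ [lev (Suc k) (shf m 1)]))"
proof -
  obtain g where g: "emap g (lev k (blk m 0)) (catg B)" using assms unfolding embg_def by blast
  define h where "h xs = (if hd xs = 0 then g (tl xs) else length B # (hd xs - 1) # tl xs)" for xs
  have gm: "\<exists>w b. g v = w # b \<and> w < length B \<and> b \<in> fst (B ! w) \<and> m (0 # v) \<le> snd (B ! w) b" if "length v = k" for v
  proof -
    have v: "v \<in> fst (lev k (blk m 0))" using that by simp
    obtain w b where wb: "g v = w # b" "w < length B" "b \<in> fst (B ! w)" using emapD(1)[OF g v] by (auto simp: mem_catg)
    have "m (0 # v) \<le> snd (B ! w) b" using emapD(2)[OF g v] wb by (simp add: blk_def)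
    thus ?thesis using wb by blast
  qed
  have "emap h (lev (Suc k) m) (catg (B @ [lev (Suc k) (shf m 1)]))"
  proof (rule emapI)
    fix xs assume "xs \<in> fst (lev (Suc k) m)"
    then obtain c v where xs: "xs = c # v" "length v = k" by (auto simp: length_Suc_conv)
    show "h xs \<in> fst (catg (B @ [lev (Suc k) (shf m 1)]))"
    proof (cases "c = 0")
      case True
      obtain w b where "g v = w # b" "w < length B" "b \<in> fst (B ! w)" using gm[OF xs(2)] by blast
      thus ?thesis using True xs by (simp add: h_def nth_append)
    next
      case False
      thus ?thesis using xs by (simp add: h_def nth_append)
    qed
    show "snd (lev (Suc k) m) xs \<le> snd (catg (B @ [lev (Suc k) (shf m 1)])) (h xs)"
    proof (cases "c = 0")
      case True
      obtain w b where "g v = w # b" "w < length B" "b \<in> fst (B ! w)" "m (0 # v) \<le> snd (B ! w) b" using gm[OF xs(2)] by blast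
      thus ?thesis using True xs by (simp add: h_def nth_append)
    next
      case False
      thus ?thesis using xs by (simp add: h_def nth_append shf_def)
    qed
  next
    fix xs ys assume "xs \<in> fst (lev (Suc k) m)" "ys \<in> fst (lev (Suc k) m)" and xy: "llt xs ys"
    then obtain c v c' v' where xs: "xs = c # v" "length v = k" and ys: "ys = c' # v'" "length v' = k"
      by (auto simp: length_Suc_conv)
    show "llt (h xs) (h ys)"
    proof (cases "c = 0")
      case True
      obtain w b where wb: "g v = w # b" "w < length B" using gm[OF xs(2)] by blast
      show ?thesis
      proof (cases "c' = 0")
        case True
        have "llt v v'" using xy xs ys \<open>c = 0\<close> True by simp
        hence "llt (g v) (g v')" using emapD(3)[OF g] xs(2) ys(2) by simp
        thus ?thesis using \<open>c = 0\<close> True xs ys by (simp add: h_def)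
      next
        case False
        thus ?thesis using \<open>c = 0\<close> xs ys wb by (simp add: h_def)
      qed
    next
      case False
      hence "c' \<noteq> 0" using xy xs ys by auto
      thus ?thesis using False xy xs ys by (auto simp: h_def)
    qed
  qed
  thus ?thesis unfolding embg_def by blast
qed

lemma cat_subst_last:
  assumes "embg Z (catg B)"
  shows "embg (catg (A @ [Z])) (catg (A @ B))"
proof -
  obtain g where g: "emap g Z (catg B)" using assms unfolding embg_def by blast
  define h where "h xs = (if hd xs < length A then xs else (length A + hd (g (tl xs))) # tl (g (tl xs)))" for xs
  have gm: "\<exists>w b. g a = w # b \<and> w < length B \<and> b \<in> fst (B ! w) \<and> snd Z a \<le> snd (B ! w) b" if aZ: "a \<in> fst Z" for a
  proof -
    obtain w b where wb: "g a = w # b" "w < length B" "b \<in> fst (B ! w)" using emapD(1)[OF g aZ] by (auto simp: mem_catg)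
    thus ?thesis using emapD(2)[OF g aZ] by auto
  qed
  have "emap h (catg (A @ [Z])) (catg (A @ B))"
  proof (rule emapI)
    fix xs assume "xs \<in> fst (catg (A @ [Z]))"
    then obtain i a where xs: "xs = i # a" "i < Suc (length A)" "a \<in> fst ((A @ [Z]) ! i)" by (auto simp: mem_catg)
    show "h xs \<in> fst (catg (A @ B))"
    proof (cases "i < length A")
      case True thus ?thesis using xs by (simp add: h_def nth_append)
    next
      case False
      hence "i = length A" using xs by simp
      hence aZ: "a \<in> fst Z" using xs by simp
      obtain w b where "g a = w # b" "w < length B" "b \<in> fst (B ! w)" using gm[OF aZ] by blast
      thus ?thesis using xs \<open>i = length A\<close> by (simp add: h_def nth_append)
    qed
    show "snd (catg (A @ [Z])) xs \<le> snd (catg (A @ B)) (h xs)"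
    proof (cases "i < length A")
      case True thus ?thesis using xs by (simp add: h_def nth_append)
    next
      case False
      hence "i = length A" using xs by simp
      hence aZ: "a \<in> fst Z" using xs by simp
      obtain w b where "g a = w # b" "w < length B" "snd Z a \<le> snd (B ! w) b" using gm[OF aZ] by blast
      thus ?thesis using xs \<open>i = length A\<close> by (simp add: h_def nth_append)
    qed
  next
    fix xs ys assume xM: "xs \<in> fst (catg (A @ [Z]))" and yM: "ys \<in> fst (catg (A @ [Z]))" and xy: "llt xs ys"
    obtain i a where xs: "xs = i # a" "i < Suc (length A)" "a \<in> fst ((A @ [Z]) ! i)" using xM by (auto simp: mem_catg)
    obtain i' a' where ys: "ys = i' # a'" "i' < Suc (length A)" "a' \<in> fst ((A @ [Z]) ! i')" using yM by (auto simp: mem_catg)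
    show "llt (h xs) (h ys)"
    proof (cases "i < length A")
      case True
      show ?thesis
      proof (cases "i' < length A")
        case True thus ?thesis using \<open>i < length A\<close> xy xs ys by (simp add: h_def)
      next
        case False thus ?thesis using \<open>i < length A\<close> xy xs ys by (simp add: h_def)
      qed
    next
      case False
      hence i: "i = length A" using xs by simp
      hence "i' = length A" using xy xs ys by auto
      hence "llt a a'" using xy xs ys i by simp
      moreover have "a \<in> fst Z" "a' \<in> fst Z" using xs ys i \<open>i' = length A\<close> by simp_all
      ultimately have "llt (g a) (g a')" using emapD(3)[OF g] by blast
      moreover obtain w b where "g a = w # b" using gm[OF \<open>a \<in> fst Z\<close>] by blast
      moreover obtain w' b' where "g a' = w' # b'" using gm[OF \<open>a' \<in> fst Z\<close>] by blast
      ultimately show ?thesis using i \<open>i' = length A\<close> xs ys by (simp add: h_def)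
    qed
  qed
  thus ?thesis unfolding embg_def by blast
qed

lemma chain:
  assumes inf: "\<And>t. t \<in> set ts \<Longrightarrow> infinite {j. embg (canon t) (lev k (blk l j))}"
  shows "\<exists>i'. embg (catg (map canon ts)) ({x \<in> AL (Suc k). i \<le> hd x \<and> hd x < i'}, l)"
  using inf
proof (induct ts arbitrary: i)
  case Nil
  have "fst (catg (map canon [])) = {}" by (auto simp: mem_catg)
  thus ?case unfolding embg_def using emap_empty by blast
next
  case (Cons t ts)
  have "infinite {j. embg (canon t) (lev k (blk l j))}" using Cons by simp
  then obtain j where j: "i \<le> j" "embg (canon t) (lev k (blk l j))"
    unfolding infinite_nat_iff_unbounded_le by blast
  obtain f where f: "emap f (canon t) (lev k (blk l j))" using j(2) unfolding embg_def by blast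
  obtain i' g where g: "emap g (catg (map canon ts)) ({x \<in> AL (Suc k). Suc j \<le> hd x \<and> hd x < i'}, l)"
    using Cons unfolding embg_def by force
  define h where "h xs = (if hd xs = 0 then j # f (tl xs) else g ((hd xs - 1) # tl xs))" for xs
  define i'' where "i'' = max i' (Suc j)"
  have gm: "g (w # a) \<in> AL (Suc k) \<and> Suc j \<le> hd (g (w # a)) \<and> hd (g (w # a)) < i'" if "w < length ts" "a \<in> fst (canon (ts ! w))" for w a
    using emapD(1)[OF g, of "w # a"] that by simp
  have "emap h (catg (map canon (t # ts))) ({x \<in> AL (Suc k). i \<le> hd x \<and> hd x < i''}, l)"
  proof (rule emapI)
    fix xs assume "xs \<in> fst (catg (map canon (t # ts)))"
    then obtain w a where xs: "xs = w # a" "w < Suc (length ts)" "a \<in> fst ((canon t # map canon ts) ! w)"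
      by (auto simp: mem_catg)
    show "h xs \<in> fst ({x \<in> AL (Suc k). i \<le> hd x \<and> hd x < i''}, l)"
    proof (cases w)
      case 0
      thus ?thesis using xs emapD(1)[OF f, of a] j(1) by (simp add: h_def i''_def)
    next
      case (Suc w')
      thus ?thesis using xs gm[of w' a] j(1) by (simp add: h_def i''_def)
    qed
    show "snd (catg (map canon (t # ts))) xs \<le> snd ({x \<in> AL (Suc k). i \<le> hd x \<and> hd x < i''}, l) (h xs)"
    proof (cases w)
      case 0
      thus ?thesis using xs emapD(2)[OF f, of a] by (simp add: h_def blk_def)
    next
      case (Suc w')
      thus ?thesis using xs emapD(2)[OF g, of "w' # a"] by (simp add: h_def)
    qed
  next
    fix xs ys assume xM: "xs \<in> fst (catg (map canon (t # ts)))" and yM: "ys \<in> fst (catg (map canon (t # ts)))"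
      and xy: "llt xs ys"
    obtain w a where xs: "xs = w # a" "w < Suc (length ts)" "a \<in> fst ((canon t # map canon ts) ! w)"
      using xM by (auto simp: mem_catg)
    obtain w2 a2 where ys: "ys = w2 # a2" "w2 < Suc (length ts)" "a2 \<in> fst ((canon t # map canon ts) ! w2)"
      using yM by (auto simp: mem_catg)
    show "llt (h xs) (h ys)"
    proof (cases w)
      case 0
      show ?thesis
      proof (cases w2)
        case 0
        thus ?thesis using \<open>w = 0\<close> xs ys xy emapD(3)[OF f, of a a2] by (simp add: h_def)
      next
        case (Suc w2')
        obtain c r where "g (w2' # a2) = c # r" "Suc j \<le> c"
          using gm[of w2' a2] ys Suc by (cases "g (w2' # a2)") auto
        thus ?thesis using \<open>w = 0\<close> Suc xs ys by (simp add: h_def)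
      qed
    next
      case (Suc w')
      then obtain w2' where w2: "w2 = Suc w2'" using xy xs ys by (cases w2) auto
      have "llt (w' # a) (w2' # a2)" using xy xs ys Suc w2 by simp
      thus ?thesis using Suc w2 xs ys emapD(3)[OF g, of "w' # a" "w2' # a2"] by (simp add: h_def)
    qed
  qed
  thus ?case unfolding embg_def by blast
qed


lemma blk_shf: "blk (shf l J) p = blk l (p + J)"
  by (simp add: blk_def shf_def)

lemma shf_shf1: "shf (shf l n) 1 = shf l (Suc n)"
  by (rule ext) (simp add: shf_def)

lemma shift_region:
  assumes "embg X ({x \<in> AL (Suc k). J + c + 1 \<le> hd x \<and> hd x < i'}, l)"
  shows "embg X ({x\<in>AL (Suc k). lle (c # v) x \<and> llt x ((i' - J) # replicate k 0)}, shf l J)"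
proof -
  have "emap (\<lambda>x. (hd x - J) # tl x) ({x \<in> AL (Suc k). J + c + 1 \<le> hd x \<and> hd x < i'}, l)
          ({x\<in>AL (Suc k). lle (c # v) x \<and> llt x ((i' - J) # replicate k 0)}, shf l J)"
  proof (rule emapI)
    fix x assume "x \<in> fst ({x \<in> AL (Suc k). J + c + 1 \<le> hd x \<and> hd x < i'}, l)"
    then obtain a r where x: "x = a # r" "length r = k" "J + c + 1 \<le> a" "a < i'" by (cases x) auto
    show "(hd x - J) # tl x \<in> fst ({x\<in>AL (Suc k). lle (c # v) x \<and> llt x ((i' - J) # replicate k 0)}, shf l J)"
      using x by (auto simp: lle_def)
    show "snd ({x \<in> AL (Suc k). J + c + 1 \<le> hd x \<and> hd x < i'}, l) x
          \<le> snd ({x\<in>AL (Suc k). lle (c # v) x \<and> llt x ((i' - J) # replicate k 0)}, shf l J) ((hd x - J) # tl x)"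
      using x by (simp add: shf_def)
  next
    fix x y assume xM: "x \<in> fst ({x \<in> AL (Suc k). J + c + 1 \<le> hd x \<and> hd x < i'}, l)"
      and yM: "y \<in> fst ({x \<in> AL (Suc k). J + c + 1 \<le> hd x \<and> hd x < i'}, l)" and xy: "llt x y"
    obtain a r where x: "x = a # r" "J + c + 1 \<le> a" using xM by (cases x) auto
    obtain b s where y: "y = b # s" "J + c + 1 \<le> b" using yM by (cases y) auto
    show "llt ((hd x - J) # tl x) ((hd y - J) # tl y)" using x y xy by auto
  qed
  thus ?thesis using assms embg_trans unfolding embg_def[of X] embg_def[of "({x \<in> AL (Suc k). J + c + 1 \<le> hd x \<and> hd x < i'}, l)"] by (meson emap_comp)
qed

lemma G_step:
  assumes G: "Gk TYPE('q::preorder) k" and C: "\<And>h. h \<le> k \<Longrightarrow> CANONk TYPE('q) h"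
  shows "Gk TYPE('q) (Suc k)"
  unfolding Gk_def
proof (intro allI impI)
  fix l :: "nat list \<Rightarrow> 'q"
  assume fin: "finite (l ` AL (Suc k))"
  define R where "R = l ` AL (Suc k)"
  have finR: "finite R" using fin by (simp add: R_def)
  have finb: "finite (blk l j ` AL k)" for j by (rule finite_subset[OF blk_range fin])
  have "\<forall>j. \<exists>W. (\<forall>P\<in>set W. fst P \<le> k \<and> indecg (pl P) \<and> snd P ` AL (fst P) \<subseteq> blk l j ` AL k \<and> embg (pl P) (lev k (blk l j))) \<and> embg (lev k (blk l j)) (catg (map pl W))"
    using G finb unfolding Gk_def by blast
  then obtain Wf where Wf: "\<And>j. (\<forall>P\<in>set (Wf j). fst P \<le> k \<and> indecg (pl P) \<and> snd P ` AL (fst P) \<subseteq> blk l j ` AL k \<and> embg (pl P) (lev k (blk l j))) \<and> embg (lev k (blk l j)) (catg (map pl (Wf j)))"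
    by metis
  have piece: "fst P \<le> k" "indecg (pl P)" "snd P ` AL (fst P) \<subseteq> R" "embg (pl P) (lev k (blk l j))" if PW: "P \<in> set (Wf j)" for P j
  proof -
    show "fst P \<le> k" "indecg (pl P)" "embg (pl P) (lev k (blk l j))" using Wf[of j] PW by blast+
    have "snd P ` AL (fst P) \<subseteq> blk l j ` AL k" using Wf[of j] PW by blast
    thus "snd P ` AL (fst P) \<subseteq> R" using blk_range[of l j k] unfolding R_def by blast
  qed
  define trf where "trf P = (SOME t. t \<in> TR R k \<and> tree_wf t \<and> embg (pl P) (canon t) \<and> embg (canon t) (pl P))" for P
  have trf: "trf P \<in> TR R k \<and> tree_wf (trf P) \<and> embg (pl P) (canon (trf P)) \<and> embg (canon (trf P)) (pl P)" if PW: "P \<in> set (Wf j)" for P j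
  proof -
    have "\<exists>t. t \<in> TR R k \<and> tree_wf t \<and> embg (pl P) (canon t) \<and> embg (canon t) (pl P)"
      by (rule tree_of_piece[OF C finR]) (use piece[OF PW] in auto)
    thus ?thesis unfolding trf_def by (rule someI_ex)
  qed
  define TT where "TT = {t \<in> TR R k. tree_wf t}"
  have finTT: "finite TT"
  proof -
    have "TT \<subseteq> TR R k" unfolding TT_def by blast
    thus ?thesis using finite_subset finite_TR[OF finR] by blast
  qed
  define Lt where "Lt j = {t \<in> TT. embg (canon t) (lev k (blk l j))}" for j
  define LL where "LL = {t \<in> TT. infinite {j. t \<in> Lt j}}"
  define Bad where "Bad = (\<Union>t\<in>TT - LL. {j. t \<in> Lt j})"
  have finBad: "finite Bad" unfolding Bad_def
  proof (rule finite_UN_I)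
    show "finite (TT - LL)" using finTT by blast
    fix t assume "t \<in> TT - LL"
    thus "finite {j. t \<in> Lt j}" by (simp add: LL_def)
  qed
  then obtain J where J0: "\<forall>j\<in>Bad. j < J" unfolding finite_nat_set_iff_bounded by blast
  have J: "j < J" if "j \<in> Bad" for j using J0 that by simp
  have goodj: "t \<in> LL" if jJ: "J \<le> j" and tT: "t \<in> TT" and te: "embg (canon t) (lev k (blk l j))" for t j
  proof (rule ccontr)
    assume nL: "t \<notin> LL"
    have "t \<in> Lt j" using tT te by (simp add: Lt_def)
    hence "j \<in> Bad" unfolding Bad_def using nL tT by blast
    thus False using J[of j] jJ by simp
  qed
  have brb: "\<exists>i'. embg (lev k (blk l (J + p))) ({x \<in> AL (Suc k). J + c + 1 \<le> hd x \<and> hd x < i'}, l)" for p c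
  proof -
    define ts where "ts = map trf (Wf (J + p))"
    have inf: "infinite {j. embg (canon t) (lev k (blk l j))}" if tin: "t \<in> set ts" for t
    proof -
      obtain P where P: "P \<in> set (Wf (J + p))" "t = trf P" using tin by (auto simp: ts_def)
      have t1: "t \<in> TT" using trf[OF P(1)] P(2) by (simp add: TT_def)
      have "embg (canon t) (lev k (blk l (J + p)))" using trf[OF P(1)] P(2) piece(4)[OF P(1)] embg_trans by blast
      hence "t \<in> LL" using goodj[OF le_add1 t1] by simp
      hence "infinite {j. t \<in> Lt j}" by (simp add: LL_def)
      moreover have "{j. t \<in> Lt j} \<subseteq> {j. embg (canon t) (lev k (blk l j))}" by (auto simp: Lt_def)
      ultimately show ?thesis using finite_subset by blast
    qed
    obtain i' where i': "embg (catg (map canon ts)) ({x \<in> AL (Suc k). J + c + 1 \<le> hd x \<and> hd x < i'}, l)"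
      using chain[OF inf] by blast
    have "embg (catg (map pl (Wf (J + p)))) (catg (map canon ts))"
    proof (rule catg_mono_pointwise)
      show "length (map pl (Wf (J + p))) = length (map canon ts)" by (simp add: ts_def)
      fix i assume "i < length (map pl (Wf (J + p)))"
      hence m: "Wf (J + p) ! i \<in> set (Wf (J + p))" by simp
      show "embg (map pl (Wf (J + p)) ! i) (map canon ts ! i)"
        using trf[OF m] \<open>i < length (map pl (Wf (J + p)))\<close> by (simp add: ts_def)
    qed
    hence "embg (lev k (blk l (J + p))) (catg (map canon ts))" using embg_trans[OF conjunct2[OF Wf[of "J+p"]]] by blast
    thus ?thesis using embg_trans[OF _ i'] by blast
  qed
  have indJ: "indecg (lev (Suc k) (shf l J))"
    unfolding indecg_def
  proof
    fix d assume d: "d \<in> fst (lev (Suc k) (shf l J))"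
    have S1: "embg (sumg (\<lambda>p. lev k (blk (shf l J) p))) ({x\<in>AL (Suc k). lle d x}, shf l J)"
    proof (rule ASM)
      show "fst (lev k (blk (shf l J) p)) \<noteq> {}" for p by (rule lev_ne)
      show "d \<in> AL (Suc k)" using d by simp
      fix p \<beta> assume b: "\<beta> \<in> AL (Suc k)"
      then obtain c v where cv: "\<beta> = c # v" by (cases \<beta>) auto
      obtain i' where "embg (lev k (blk l (J + p))) ({x \<in> AL (Suc k). J + c + 1 \<le> hd x \<and> hd x < i'}, l)"
        using brb by blast
      from shift_region[OF this, of v]
      have "embg (lev k (blk l (J + p))) ({x\<in>AL (Suc k). lle (c # v) x \<and> llt x ((i' - J) # replicate k 0)}, shf l J)" .
      moreover have "blk (shf l J) p = blk l (J + p)" by (simp add: blk_shf add.commute)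
      ultimately have "embg (lev k (blk (shf l J) p)) ({x\<in>AL (Suc k). lle \<beta> x \<and> llt x ((i' - J) # replicate k 0)}, shf l J)"
        using cv by simp
      moreover have "(i' - J) # replicate k 0 \<in> AL (Suc k)" by simp
      ultimately show "\<exists>\<gamma>\<in>AL (Suc k). embg (lev k (blk (shf l J) p)) ({x\<in>AL (Suc k). lle \<beta> x \<and> llt x \<gamma>}, shf l J)"
        by blast
    qed
    have S2: "({x\<in>AL (Suc k). lle d x}, shf l J) = tailg (lev (Suc k) (shf l J)) d"
      by (simp add: tailg_def lev_def)
    show "embg (lev (Suc k) (shf l J)) (tailg (lev (Suc k) (shf l J)) d)"
      using embg_trans[OF lev_sumg1 S1] unfolding S2 .
  qed
  have HJ: "embg (lev (Suc k) l) (catg (map pl (concat (map Wf [0..<n])) @ [lev (Suc k) (shf l n)]))" for n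
  proof (induct n)
    case 0
    have "emap (\<lambda>xs. 0 # xs) (lev (Suc k) l) (catg (map pl (concat (map Wf [0..<0])) @ [lev (Suc k) (shf l 0)]))"
      by (rule emapI) (auto simp: shf_def length_Suc_conv)
    thus ?case unfolding embg_def by blast
  next
    case (Suc n)
    have "embg (lev k (blk (shf l n) 0)) (catg (map pl (Wf n)))" using Wf[of n] by (simp add: blk_shf)
    hence "embg (lev (Suc k) (shf l n)) (catg (map pl (Wf n) @ [lev (Suc k) (shf (shf l n) 1)]))"
      by (rule cat_split_first)
    hence "embg (lev (Suc k) (shf l n)) (catg (map pl (Wf n) @ [lev (Suc k) (shf l (Suc n))]))"
      by (simp only: shf_shf1)
    hence e1: "embg (catg (map pl (concat (map Wf [0..<n])) @ [lev (Suc k) (shf l n)]))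
                (catg (map pl (concat (map Wf [0..<n])) @ (map pl (Wf n) @ [lev (Suc k) (shf l (Suc n))])))"
      by (rule cat_subst_last)
    have eq: "map pl (concat (map Wf [0..<n])) @ (map pl (Wf n) @ [lev (Suc k) (shf l (Suc n))])
      = map pl (concat (map Wf [0..<Suc n])) @ [lev (Suc k) (shf l (Suc n))]" by simp
    show ?case using embg_trans[OF Suc e1] unfolding eq .
  qed
  define W where "W = concat (map Wf [0..<J]) @ [(Suc k, shf l J)]"
  have "map pl W = map pl (concat (map Wf [0..<J])) @ [lev (Suc k) (shf l J)]" by (simp add: W_def pl_def)
  hence cov: "embg (lev (Suc k) l) (catg (map pl W))" using HJ by simp
  have cands: "fst P \<le> Suc k \<and> indecg (pl P) \<and> snd P ` AL (fst P) \<subseteq> l ` AL (Suc k) \<and> embg (pl P) (lev (Suc k) l)"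
    if PW: "P \<in> set W" for P
  proof (cases "P = (Suc k, shf l J)")
    case True
    thus ?thesis using indJ shf_range[of l J k] shf_le[of k l J] by (simp add: pl_def)
  next
    case False
    then obtain j where j: "P \<in> set (Wf j)" using PW by (auto simp: W_def)
    have "embg (pl P) (lev (Suc k) l)" using embg_trans[OF piece(4)[OF j] blk_le] .
    moreover have "fst P \<le> Suc k" using piece(1)[OF j] by simp
    ultimately show ?thesis using piece(2,3)[OF j] unfolding R_def by blast
  qed
  show "\<exists>W. (\<forall>P\<in>set W. fst P \<le> Suc k \<and> indecg (pl P) \<and> snd P ` AL (fst P) \<subseteq> l ` AL (Suc k) \<and> embg (pl P) (lev (Suc k) l)) \<and>
          embg (lev (Suc k) l) (catg (map pl W))"
    using cands cov by blast
qed

lemma main_induct: "Gk TYPE('q::preorder) n \<and> CANONk TYPE('q) n"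
proof (induct n rule: less_induct)
  case (less n)
  show ?case
  proof (cases n)
    case 0 thus ?thesis using G0 CANON0 by simp
  next
    case (Suc k)
    have G: "Gk TYPE('q) k" using less Suc by simp
    have C: "\<And>h. h \<le> k \<Longrightarrow> CANONk TYPE('q) h" using less Suc by simp
    have "Gk TYPE('q) (Suc k)" by (rule G_step[OF G C])
    moreover have "CANONk TYPE('q) (Suc k)" by (rule CANON_step[OF AL_step[OF G C] C])
    ultimately show ?thesis using Suc by simp
  qed
qed

lemma CANON_all: "CANONk TYPE('q::preorder) n"
  using main_induct by blast

lemma AL_all: "ALk TYPE('q::preorder) (Suc k)"
  using AL_step main_induct by blast


lemma LT_less_than: "LT = less_than" by (auto simp: LT_def)

lemma olt_conv: "olt a b \<longleftrightarrow> length a < length b \<or> length a = length b \<and> llt a b"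
  unfolding olt_def lenlex_conv llt_def LT_less_than by (auto simp: lexord_lex)

definition pad :: "nat \<Rightarrow> nat list \<Rightarrow> nat list" where
  "pad n b = replicate (n - length b) 0 @ b"

definition unpad :: "nat list \<Rightarrow> nat list" where
  "unpad xs = dropWhile (\<lambda>x. x = 0) xs"

lemma length_pad[simp]: "length b \<le> n \<Longrightarrow> length (pad n b) = n"
  by (simp add: pad_def)

lemma unpad_Nil[simp]: "unpad [] = []" by (simp add: unpad_def)
lemma unpad_Cons0[simp]: "unpad (0 # xs) = unpad xs" by (simp add: unpad_def)
lemma unpad_Cons: "c \<noteq> 0 \<Longrightarrow> unpad (c # xs) = c # xs" by (simp add: unpad_def)

lemma unpad_replicate_append[simp]: "unpad (replicate k 0 @ xs) = unpad xs"
  by (induct k) simp_all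

lemma unpad_ord: "is_ord b \<Longrightarrow> unpad b = b"
  by (cases b) (auto simp: is_ord_def unpad_Cons)

lemma unpad_pad[simp]: "is_ord b \<Longrightarrow> unpad (pad n b) = b"
  by (simp add: pad_def unpad_ord)

lemma is_ord_unpad[simp]: "is_ord (unpad xs)"
proof (induct xs)
  case Nil then show ?case by (simp add: is_ord_def)
next
  case (Cons a xs) then show ?case by (cases "a = 0") (auto simp: is_ord_def unpad_Cons)
qed

lemma length_unpad: "length (unpad xs) \<le> length xs"
  by (simp add: unpad_def length_dropWhile_le)

lemma pad_unpad[simp]: "pad (length xs) (unpad xs) = xs"
proof (induct xs)
  case Nil then show ?case by (simp add: pad_def)
next
  case (Cons c xs)
  show ?case
  proof (cases "c = 0")
    case True
    have l: "length (unpad xs) \<le> length xs" by (rule length_unpad)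
    have "pad (length (c # xs)) (unpad (c # xs)) = 0 # pad (length xs) (unpad xs)"
      using True l by (simp add: pad_def Suc_diff_le)
    thus ?thesis using Cons True by simp
  next
    case False thus ?thesis by (simp add: unpad_Cons pad_def)
  qed
qed

lemma pad_split: "length a \<le> m \<Longrightarrow> m \<le> n \<Longrightarrow> pad n a = replicate (n - m) 0 @ pad m a"
  by (simp add: pad_def replicate_add[symmetric])

lemma llt_pad_lt:
  assumes a: "is_ord a" and b: "is_ord b" and lab: "length a < length b" and bn: "length b \<le> n"
  shows "llt (pad n a) (pad n b)"
proof -
  obtain y ys where yb: "b = y # ys" using lab by (cases b) auto
  have y: "y \<noteq> 0" using b yb by (simp add: is_ord_def)
  have "pad n a = replicate (n - length b) 0 @ pad (length b) a" using lab bn by (intro pad_split) auto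
  moreover have "pad (length b) a = 0 # replicate (length b - length a - 1) 0 @ a"
    using lab by (simp add: pad_def) (metis Suc_diff_Suc replicate_Suc zero_less_diff)
  moreover have "pad n b = replicate (n - length b) 0 @ y # ys" by (simp add: pad_def yb)
  ultimately show ?thesis using y by simp
qed

lemma olt_pad:
  assumes a: "is_ord a" and b: "is_ord b" and an: "length a \<le> n" and bn: "length b \<le> n"
  shows "olt a b \<longleftrightarrow> llt (pad n a) (pad n b)"
proof (cases "length a < length b")
  case True thus ?thesis using llt_pad_lt[OF a b True bn] by (simp add: olt_conv)
next
  case False
  show ?thesis
  proof (cases "length a = length b")
    case True thus ?thesis by (simp add: olt_conv pad_def)
  next
    case False
    hence "length b < length a" using \<open>\<not> length a < length b\<close> by simp
    hence "llt (pad n b) (pad n a)" using llt_pad_lt[OF b a _ an] by simp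
    thus ?thesis using llt_asym \<open>length b < length a\<close> by (auto simp: olt_conv)
  qed
qed

lemma not_llt_zeros: "length r = m \<Longrightarrow> \<not> llt r (replicate m 0)"
  by (induct r arbitrary: m) auto

lemma lle_zeros: "length r = m \<Longrightarrow> lle (replicate m 0) r"
  using not_llt_zeros llt_linear unfolding lle_def by blast

lemma odom_pow: "b \<in> odom (omega_pow n) \<longleftrightarrow> is_ord b \<and> length b \<le> n"
proof -
  have "olt b (omega_pow n) \<longleftrightarrow> length b \<le> n" if ob: "is_ord b"
  proof (cases "length b = Suc n")
    case True
    then obtain c r where cr: "b = c # r" "length r = n" by (cases b) auto
    have "c \<noteq> 0" using ob cr by (simp add: is_ord_def)
    hence "\<not> llt b (omega_pow n)" using cr not_llt_zeros[of r n] by (simp add: omega_pow_def)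
    thus ?thesis using True by (simp add: olt_conv omega_pow_def)
  next
    case False thus ?thesis by (auto simp: olt_conv omega_pow_def)
  qed
  thus ?thesis by (auto simp: odom_def)
qed

lemma length_omega_pow[simp]: "length (omega_pow n) = Suc n"
  by (simp add: omega_pow_def)

lemma is_ord_omega_pow[simp]: "is_ord (omega_pow n)"
  by (simp add: omega_pow_def is_ord_def)

lemma olt_omega_pow: "olt (omega_pow h) (omega_pow n) \<longleftrightarrow> h < n"
  by (auto simp: olt_conv omega_pow_def)


lemma pad_unpad_n: "length xs = n \<Longrightarrow> pad n (unpad xs) = xs"
  using pad_unpad by blast

lemma oadd_Nil2[simp]: "oadd d [] = d" by (simp add: oadd_def)

lemma oadd_Nil1: "oadd [] i = i" by (simp add: oadd_def)

lemma oadd_props: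
  assumes d: "is_ord d" and i: "is_ord i"
  shows "is_ord (oadd d i) \<and> length (oadd d i) = max (length d) (length i)"
proof (cases "i = []")
  case True thus ?thesis using d by simp
next
  case False
  then obtain a r where ar: "i = a # r" by (cases i) auto
  have a: "a \<noteq> 0" using i ar by (simp add: is_ord_def)
  show ?thesis
  proof (cases "length d < length i")
    case True thus ?thesis using i ar by (simp add: oadd_def)
  next
    case False
    hence le: "length i \<le> length d" by simp
    have eq: "oadd d i = take (length d - length i) d @ [d ! (length d - length i) + a] @ r"
      using False ar by (simp add: oadd_def)
    have len: "length (oadd d i) = length d" using le ar by (subst eq) simp
    have "is_ord (oadd d i)"
    proof (cases "length d - length i = 0")
      case True thus ?thesis using a by (simp add: eq is_ord_def)
    next
      case False
      then obtain c d' where cd: "d = c # d'" using le by (cases d) auto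
      have "c \<noteq> 0" using d cd by (simp add: is_ord_def)
      moreover obtain k where k: "length d - length i = Suc k" using False by (cases "length d - length i") auto
      moreover have "take (length d - length i) d = c # take k d'" using k cd by simp
      ultimately show ?thesis unfolding eq is_ord_def by simp
    qed
    thus ?thesis using len le by simp
  qed
qed

lemma oadd_omul:
  assumes r: "is_ord r" and rh: "length r \<le> h"
  shows "oadd (omul_nat (omega_pow h) k) r = (if k = 0 then r else k # pad h r)"
proof (cases "k = 0")
  case True thus ?thesis by (simp add: omul_nat_def oadd_Nil1)
next
  case False
  hence om: "omul_nat (omega_pow h) k = k # replicate h 0" by (simp add: omul_nat_def omega_pow_def)
  show ?thesis
  proof (cases r)
    case Nil thus ?thesis using False by (simp add: om pad_def)
  next
    case (Cons a r')
    have "Suc h - length r = Suc (h - length r)" using rh by simp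
    moreover have "h - length r < h" using rh Cons by simp
    ultimately show ?thesis using False Cons rh by (simp add: om oadd_def pad_def)
  qed
qed

lemma pad_oadd_form:
  assumes d: "is_ord d" and dn: "length d \<le> n" and a: "0 < a" and n: "Suc (t + length r) = n"
  shows "pad n (oadd d (a # r)) = take t (pad n d) @ (pad n d ! t + a) # r"
proof (cases "length d < Suc (length r)")
  case True
  hence "oadd d (a # r) = a # r" by (simp add: oadd_def)
  moreover have tl: "t < n - length d" using True n by simp
  moreover have "take t (pad n d) = replicate t 0" "pad n d ! t = 0"
    using tl by (simp_all add: pad_def nth_append)
  ultimately show ?thesis using n by (simp add: pad_def)
next
  case False
  hence eq: "oadd d (a # r) = take (length d - Suc (length r)) d @ [d ! (length d - Suc (length r)) + a] @ r"
    by (simp add: oadd_def)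
  have l1: "t - (n - length d) = length d - Suc (length r)" using n False dn by simp
  have l2: "n - length d \<le> t" using n False dn by simp
  have "take t (pad n d) = replicate (n - length d) 0 @ take (length d - Suc (length r)) d"
    using l1 l2 by (simp add: pad_def)
  moreover have "pad n d ! t = d ! (length d - Suc (length r))"
    using l1 l2 by (simp add: pad_def nth_append)
  moreover have "length (oadd d (a # r)) = length d" using oadd_props[OF d, of "a # r"] a False
    by (simp add: is_ord_def)
  ultimately show ?thesis by (simp add: pad_def eq)
qed

definition phi :: "nat \<Rightarrow> nat list \<Rightarrow> nat list \<Rightarrow> nat list" where
  "phi n d xs = pad n (oadd d (unpad xs))"

lemma nz_decomp: "(xs::nat list) \<noteq> replicate (length xs) 0 \<Longrightarrow> \<exists>t a r. xs = replicate t 0 @ a # r \<and> 0 < a"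
proof (induct xs)
  case Nil thus ?case by simp
next
  case (Cons c xs)
  show ?case
  proof (cases "c = 0")
    case True
    with Cons obtain t a r where "xs = replicate t 0 @ a # r" "0 < a" by auto
    thus ?thesis using True by (metis append_Cons replicate_Suc)
  next
    case False
    have "c # xs = replicate 0 0 @ c # xs \<and> 0 < c" using False by simp
    thus ?thesis by blast
  qed
qed

lemma unpad_decomp: "0 < a \<Longrightarrow> unpad (replicate t 0 @ a # r) = a # r"
  by (simp add: unpad_Cons)

lemma unpad_zeros[simp]: "unpad (replicate t 0) = []"
  using unpad_replicate_append[of t "[]"] by simp

lemma phi_zero: "is_ord d \<Longrightarrow> length d \<le> n \<Longrightarrow> phi n d (replicate m 0) = pad n d"
  by (simp add: phi_def)

lemma phi_nz:
  assumes d: "is_ord d" and dn: "length d \<le> n" and a: "0 < a" and n: "length (replicate t 0 @ a # r) = n"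
  shows "phi n d (replicate t 0 @ a # r) = take t (pad n d) @ (pad n d ! t + a) # r"
  unfolding phi_def unpad_decomp[OF a] by (rule pad_oadd_form[OF d dn a]) (use n in simp)

lemma phi_len:
  assumes d: "is_ord d" and dn: "length d \<le> n" and xs: "length xs = n"
  shows "length (phi n d xs) = n"
proof -
  have "length (oadd d (unpad xs)) \<le> n" using oadd_props[OF d is_ord_unpad[of xs]] dn length_unpad[of xs] xs by simp
  thus ?thesis by (simp add: phi_def)
qed

lemma phi_ord:
  assumes d: "is_ord d"
  shows "is_ord (oadd d (unpad xs))"
  using oadd_props[OF d is_ord_unpad] by simp

lemma take_nth_split: "t < length D \<Longrightarrow> D = take t D @ D ! t # drop (Suc t) D"
  by (simp add: id_take_nth_drop)

lemma phi_ge: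
  assumes d: "is_ord d" and dn: "length d \<le> n" and xs: "length xs = n" and nz: "xs \<noteq> replicate n 0"
  shows "llt (pad n d) (phi n d xs)"
proof -
  obtain t a r where tar: "xs = replicate t 0 @ a # r" "0 < a" using nz_decomp nz xs by blast
  have tn: "t < n" using xs tar by simp
  have p: "phi n d xs = take t (pad n d) @ (pad n d ! t + a) # r" using phi_nz[OF d dn tar(2)] xs tar by simp
  define D where "D = pad n d"
  have De: "D = take t D @ D ! t # drop (Suc t) D" using tn dn unfolding D_def by (intro take_nth_split) simp
  have "llt (take t D @ D ! t # drop (Suc t) D) (take t D @ (D ! t + a) # r)" using tar(2) by simp
  hence "llt D (take t D @ (D ! t + a) # r)" using De by simp
  thus ?thesis using p by (simp add: D_def)
qed

lemma take_lt_split: "t' < t \<Longrightarrow> t \<le> length D \<Longrightarrow> \<exists>w. take t D = take t' D @ D ! t' # w"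
proof -
  assume a: "t' < t" "t \<le> length D"
  have "take t D = take t' D @ drop t' (take t D)" using a by (metis append_take_drop_id min.absorb1 order.strict_implies_order take_take)
  moreover have "drop t' (take t D) = D ! t' # drop (Suc t') (take t D)" using a
    by (metis Cons_nth_drop_Suc length_take min.absorb2 nth_take order.strict_trans2 order.strict_implies_order)
  ultimately show ?thesis by auto
qed

lemma phi_mono:
  assumes d: "is_ord d" and dn: "length d \<le> n" and xs: "length xs = n" and ys: "length ys = n" and xy: "llt xs ys"
  shows "llt (phi n d xs) (phi n d ys)"
proof (cases "xs = replicate n 0")
  case True
  have "ys \<noteq> replicate n 0" using True xy by auto
  thus ?thesis using True phi_ge[OF d dn ys] phi_zero[OF d dn] by simp
next
  case False
  obtain t a r where x: "xs = replicate t 0 @ a # r" "0 < a" using nz_decomp False xs by blast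
  have ynz: "ys \<noteq> replicate n 0" using xy not_llt_zeros[OF xs] by auto
  obtain t' a' r' where y: "ys = replicate t' 0 @ a' # r'" "0 < a'" using nz_decomp ynz ys by blast
  have px: "phi n d xs = take t (pad n d) @ (pad n d ! t + a) # r" using phi_nz[OF d dn x(2)] xs x by simp
  have py: "phi n d ys = take t' (pad n d) @ (pad n d ! t' + a') # r'" using phi_nz[OF d dn y(2)] ys y by simp
  have lp: "length (pad n d) = n" using dn by simp
  consider "t < t'" | "t' < t" | "t = t'" by linarith
  thus ?thesis
  proof cases
    case 1
    have "ys = replicate t 0 @ 0 # replicate (t' - t - 1) 0 @ a' # r'"
      using 1 y by (simp add: replicate_add[symmetric]) (metis Suc_diff_Suc append_Cons replicate_Suc replicate_add zero_less_diff add_diff_inverse_nat less_imp_le_nat not_less)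
    hence False using xy x by simp
    thus ?thesis ..
  next
    case 2
    have "t \<le> length (pad n d)" using lp xs x by simp
    then obtain w where "take t (pad n d) = take t' (pad n d) @ pad n d ! t' # w" using take_lt_split[OF 2] by blast
    thus ?thesis using px py y(2) by simp
  next
    case 3
    hence "llt (a # r) (a' # r')" using xy x y by simp
    thus ?thesis using px py 3 by auto
  qed
qed

lemma llt_same_len_decomp:
  "length X = length Y \<Longrightarrow> llt X Y \<Longrightarrow> \<exists>u x y X' Y'. X = u @ x # X' \<and> Y = u @ y # Y' \<and> x < y"
proof (induct X arbitrary: Y)
  case Nil thus ?case by simp
next
  case (Cons a X)
  then obtain b Y1 where Y: "Y = b # Y1" by (cases Y) auto
  show ?case
  proof (cases "a < b")
    case True thus ?thesis using Y by (metis append.left_neutral)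
  next
    case False
    hence ab: "a = b \<and> llt X Y1" using Cons Y by simp
    have lX: "length X = length Y1" using Cons.prems(1) Y by simp
    obtain u x y X' Y' where "X = u @ x # X'" "Y1 = u @ y # Y'" "x < y" using Cons.hyps[OF lX] ab by blast
    thus ?thesis using Y \<open>a = b \<and> llt X Y1\<close> by (metis append_Cons)
  qed
qed

lemma phi_surj:
  assumes d: "is_ord d" and dn: "length d \<le> n" and Y: "length Y = n" and DY: "lle (pad n d) Y"
  shows "\<exists>xs. length xs = n \<and> phi n d xs = Y"
proof (cases "Y = pad n d")
  case True thus ?thesis using phi_zero[OF d dn, of n] by (metis length_replicate)
next
  case False
  hence lt: "llt (pad n d) Y" using DY by (simp add: lle_def)
  obtain u x y X' Y' where dec: "pad n d = u @ x # X'" "Y = u @ y # Y'" "x < y"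
    using llt_same_len_decomp[OF _ lt] Y dn by auto
  define xs where "xs = replicate (length u) 0 @ (y - x) # Y'"
  have lxs: "length xs = n" using Y dec by (simp add: xs_def)
  have "phi n d xs = take (length u) (pad n d) @ (pad n d ! length u + (y - x)) # Y'"
    using phi_nz[OF d dn, of "y - x" "length u" Y'] dec lxs by (simp add: xs_def)
  also have "\<dots> = Y" using dec by simp
  finally show ?thesis using lxs by blast
qed


definition Ls :: "'q tseq \<Rightarrow> nat list \<Rightarrow> 'q" where
  "Ls s = (\<lambda>xs. seq_at s (unpad xs))"

lemma olt_trans: "olt x y \<Longrightarrow> olt y z \<Longrightarrow> olt x z"
  unfolding olt_def using lenlex_trans trans_less_than by blast

lemma emb_embg:
  assumes sn: "seq_len s = omega_pow n" and tm: "seq_len t = omega_pow m"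
  shows "emb s t \<longleftrightarrow> embg (lev n (Ls s)) (lev m (Ls (t :: ('q::preorder) tseq)))"
proof
  assume "emb s t"
  then obtain f where f1: "\<forall>i\<in>odom (seq_len s). f i \<in> odom (seq_len t) \<and> seq_at s i \<le> seq_at t (f i)"
    and f2: "\<forall>i\<in>odom (seq_len s). \<forall>j\<in>odom (seq_len s). olt i j \<longrightarrow> olt (f i) (f j)" unfolding emb_def by blast
  have u: "unpad xs \<in> odom (seq_len s)" if "length xs = n" for xs
    using sn that length_unpad[of xs] by (simp add: odom_pow)
  have fu: "is_ord (f (unpad xs)) \<and> length (f (unpad xs)) \<le> m" if "length xs = n" for xs
    using f1 u[OF that] tm by (simp add: odom_pow)
  have "emap (\<lambda>xs. pad m (f (unpad xs))) (lev n (Ls s)) (lev m (Ls t))"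
  proof (rule emapI)
    fix xs assume "xs \<in> fst (lev n (Ls s))"
    hence xs: "length xs = n" by simp
    show "pad m (f (unpad xs)) \<in> fst (lev m (Ls t))" using fu[OF xs] by simp
    show "snd (lev n (Ls s)) xs \<le> snd (lev m (Ls t)) (pad m (f (unpad xs)))"
      using f1 u[OF xs] fu[OF xs] by (simp add: Ls_def)
  next
    fix xs ys assume "xs \<in> fst (lev n (Ls s))" "ys \<in> fst (lev n (Ls s))" "llt xs ys"
    hence xs: "length xs = n" and ys: "length ys = n" and xy: "llt xs ys" by auto
    have "olt (unpad xs) (unpad ys)"
      using olt_pad[OF is_ord_unpad is_ord_unpad, of xs n ys] length_unpad[of xs] length_unpad[of ys] xs ys xy
      by (simp add: pad_unpad_n)
    hence "olt (f (unpad xs)) (f (unpad ys))" using f2 u[OF xs] u[OF ys] by blast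
    thus "llt (pad m (f (unpad xs))) (pad m (f (unpad ys)))"
      using olt_pad fu[OF xs] fu[OF ys] by blast
  qed
  thus "embg (lev n (Ls s)) (lev m (Ls t))" unfolding embg_def by blast
next
  assume "embg (lev n (Ls s)) (lev m (Ls t))"
  then obtain g where g: "emap g (lev n (Ls s)) (lev m (Ls t))" unfolding embg_def by blast
  have gl: "length (g xs) = m" if "length xs = n" for xs using emapD(1)[OF g] that by simp
  define f where "f b = unpad (g (pad n b))" for b
  have "\<forall>i\<in>odom (seq_len s). f i \<in> odom (seq_len t) \<and> seq_at s i \<le> seq_at t (f i)"
  proof
    fix i assume "i \<in> odom (seq_len s)"
    hence i: "is_ord i" "length i \<le> n" using sn by (simp_all add: odom_pow)
    have pl: "length (pad n i) = n" using i by simp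
    have "f i \<in> odom (seq_len t)" using tm gl[OF pl] length_unpad[of "g (pad n i)"] by (simp add: f_def odom_pow)
    moreover have "seq_at s i \<le> seq_at t (f i)"
      using emapD(2)[OF g, of "pad n i"] pl i by (simp add: Ls_def f_def)
    ultimately show "f i \<in> odom (seq_len t) \<and> seq_at s i \<le> seq_at t (f i)" by blast
  qed
  moreover have "\<forall>i\<in>odom (seq_len s). \<forall>j\<in>odom (seq_len s). olt i j \<longrightarrow> olt (f i) (f j)"
  proof (intro ballI impI)
    fix i j assume "i \<in> odom (seq_len s)" "j \<in> odom (seq_len s)" "olt i j"
    hence i: "is_ord i" "length i \<le> n" and j: "is_ord j" "length j \<le> n" and ij: "olt i j"
      using sn by (simp_all add: odom_pow)
    have "llt (pad n i) (pad n j)" using olt_pad[OF i(1) j(1) i(2) j(2)] ij by simp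
    hence "llt (g (pad n i)) (g (pad n j))" using emapD(3)[OF g] i j by simp
    moreover have "length (g (pad n i)) = m" "length (g (pad n j)) = m" using gl i j by simp_all
    ultimately show "olt (f i) (f j)"
      using olt_pad[OF is_ord_unpad is_ord_unpad, of "g (pad n i)" m "g (pad n j)"]
        length_unpad[of "g (pad n i)"] length_unpad[of "g (pad n j)"]
      by (simp add: f_def pad_unpad_n)
  qed
  ultimately show "emb s t" unfolding emb_def by blast
qed

lemma seq_range_Ls:
  assumes sn: "seq_len s = omega_pow n"
  shows "seq_range s = Ls s ` AL n"
proof
  show "seq_range s \<subseteq> Ls s ` AL n"
  proof
    fix x assume "x \<in> seq_range s"
    then obtain b where b: "b \<in> odom (seq_len s)" "x = seq_at s b" by (auto simp: seq_range_def)
    hence "is_ord b" "length b \<le> n" using sn by (simp_all add: odom_pow)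
    hence "x = Ls s (pad n b) \<and> pad n b \<in> AL n" using b by (simp add: Ls_def)
    thus "x \<in> Ls s ` AL n" by blast
  qed
next
  show "Ls s ` AL n \<subseteq> seq_range s"
  proof
    fix x assume "x \<in> Ls s ` AL n"
    then obtain xs where xs: "length xs = n" "x = Ls s xs" by blast
    have "unpad xs \<in> odom (seq_len s)" using sn xs length_unpad[of xs] by (simp add: odom_pow)
    thus "x \<in> seq_range s" using xs by (auto simp: seq_range_def Ls_def)
  qed
qed

lemma tail_len:
  assumes d: "is_ord d" "d \<noteq> []" "length d \<le> n"
  shows "(THE g. is_ord g \<and> oadd d g = omega_pow n) = omega_pow n"
proof (rule the_equality)
  show "is_ord (omega_pow n) \<and> oadd d (omega_pow n) = omega_pow n"
    using d by (simp add: oadd_def omega_pow_def is_ord_def)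
next
  fix g assume g: "is_ord g \<and> oadd d g = omega_pow n"
  have "max (length d) (length g) = Suc n" using oadd_props[OF d(1), of g] g by simp
  hence "length d < length g" using d by simp
  moreover have "g \<noteq> []" using \<open>length d < length g\<close> by auto
  ultimately show "g = omega_pow n" using g by (simp add: oadd_def)
qed

lemma seq_tail_pow:
  assumes sn: "seq_len s = omega_pow n" and d: "is_ord d" "d \<noteq> []" "length d \<le> n"
  shows "seq_tail s d = (omega_pow n, \<lambda>i. seq_at s (oadd d i))"
  using tail_len[OF d] sn by (simp add: seq_tail_def)

lemma Ls_tail:
  assumes sn: "seq_len s = omega_pow n" and d: "is_ord d" "d \<noteq> []" "length d \<le> n"
  shows "Ls (seq_tail s d) = (\<lambda>xs. seq_at s (oadd d (unpad xs)))" "seq_len (seq_tail s d) = omega_pow n"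
  using seq_tail_pow[OF assms] by (simp_all add: Ls_def seq_at_def seq_len_def)

lemma unpad_zero_iff: "length x = n \<Longrightarrow> unpad x = [] \<Longrightarrow> x = replicate n 0"
  using pad_unpad_n[of x n] by (simp add: pad_def)

lemma indec_to_g:
  assumes sn: "seq_len s = omega_pow n" and ind: "indecomposable (s :: ('q::preorder) tseq)"
  shows "indecg (lev n (Ls s))"
  unfolding indecg_def
proof
  fix x assume "x \<in> fst (lev n (Ls s))"
  hence x: "length x = n" by simp
  show "embg (lev n (Ls s)) (tailg (lev n (Ls s)) x)"
  proof (cases "unpad x = []")
    case True
    hence "x = replicate n 0" using unpad_zero_iff x by blast
    thus ?thesis by (intro embg_sub) (auto simp: lle_zeros)
  next
    case False
    define d where "d = unpad x"
    have d: "is_ord d" "d \<noteq> []" "length d \<le> n" using False x length_unpad[of x] by (simp_all add: d_def)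
    have xd: "x = pad n d" using x by (simp add: d_def pad_unpad_n)
    have "olt d (seq_len s)" using d sn odom_pow[of d n] by (simp add: odom_def)
    hence "emb s (seq_tail s d)" using ind d unfolding indecomposable_def by blast
    hence e1: "embg (lev n (Ls s)) (lev n (\<lambda>xs. seq_at s (oadd d (unpad xs))))"
      using emb_embg[OF sn Ls_tail(2)[OF sn d]] Ls_tail(1)[OF sn d] by simp
    have "emap (phi n d) (lev n (\<lambda>xs. seq_at s (oadd d (unpad xs)))) (tailg (lev n (Ls s)) x)"
    proof (rule emapI)
      fix xs assume "xs \<in> fst (lev n (\<lambda>xs. seq_at s (oadd d (unpad xs))))"
      hence xs: "length xs = n" by simp
      have "lle (pad n d) (phi n d xs)"
      proof (cases "xs = replicate n 0")
        case True thus ?thesis using phi_zero[OF d(1) d(3)] by simp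
      next
        case False thus ?thesis using phi_ge[OF d(1) d(3) xs] by (simp add: lle_def)
      qed
      thus "phi n d xs \<in> fst (tailg (lev n (Ls s)) x)" using phi_len[OF d(1) d(3) xs] xd by simp
      show "snd (lev n (\<lambda>xs. seq_at s (oadd d (unpad xs)))) xs \<le> snd (tailg (lev n (Ls s)) x) (phi n d xs)"
        using phi_ord[OF d(1), of xs] by (simp add: Ls_def phi_def)
    next
      fix xs ys assume "xs \<in> fst (lev n (\<lambda>xs. seq_at s (oadd d (unpad xs))))"
        "ys \<in> fst (lev n (\<lambda>xs. seq_at s (oadd d (unpad xs))))" "llt xs ys"
      thus "llt (phi n d xs) (phi n d ys)" using phi_mono[OF d(1) d(3)] by simp
    qed
    hence "embg (lev n (\<lambda>xs. seq_at s (oadd d (unpad xs)))) (tailg (lev n (Ls s)) x)" unfolding embg_def by blast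
    thus ?thesis using embg_trans[OF e1] by blast
  qed
qed

lemma phi_inj:
  assumes d: "is_ord d" "length d \<le> n" and xs: "length xs = n" and ys: "length ys = n" and eq: "phi n d xs = phi n d ys"
  shows "xs = ys"
  using phi_mono[OF d xs ys] phi_mono[OF d ys xs] eq llt_linear[of xs ys] by auto

lemma g_to_indec:
  assumes sn: "seq_len s = omega_pow n" and ind: "indecg (lev n (Ls (s :: ('q::preorder) tseq)))"
  shows "indecomposable s"
  unfolding indecomposable_def
proof (intro allI impI)
  fix d assume "is_ord d \<and> d \<noteq> [] \<and> olt d (seq_len s)"
  hence d: "is_ord d" "d \<noteq> []" "length d \<le> n" using sn odom_pow[of d n] by (auto simp: odom_def)
  define x where "x = pad n d"
  have xl: "x \<in> fst (lev n (Ls s))" using d by (simp add: x_def)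
  obtain g where g: "emap g (lev n (Ls s)) (tailg (lev n (Ls s)) x)" using ind xl unfolding indecg_def embg_def by blast
  define inv where "inv ys = (SOME xs. length xs = n \<and> phi n d xs = ys)" for ys
  have inv: "length (inv ys) = n \<and> phi n d (inv ys) = ys" if "length ys = n" "lle x ys" for ys
    unfolding inv_def by (rule someI_ex) (use phi_surj[OF d(1) d(3)] that in \<open>simp add: x_def\<close>)
  have gt: "length (g xs) = n \<and> lle x (g xs)" if "length xs = n" for xs using emapD(1)[OF g] that by simp
  have "emap (inv \<circ> g) (lev n (Ls s)) (lev n (\<lambda>xs. seq_at s (oadd d (unpad xs))))"
  proof (rule emapI)
    fix xs assume "xs \<in> fst (lev n (Ls s))"
    hence xs: "length xs = n" by simp
    have i: "length (inv (g xs)) = n \<and> phi n d (inv (g xs)) = g xs" using inv gt[OF xs] by blast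
    show "(inv \<circ> g) xs \<in> fst (lev n (\<lambda>xs. seq_at s (oadd d (unpad xs))))" using i by simp
    have "Ls s xs \<le> Ls s (g xs)" using emapD(2)[OF g, of xs] xs by simp
    also have "Ls s (g xs) = seq_at s (oadd d (unpad (inv (g xs))))"
      using i phi_ord[OF d(1), of "inv (g xs)"] by (metis Ls_def phi_def unpad_pad)
    finally show "snd (lev n (Ls s)) xs \<le> snd (lev n (\<lambda>xs. seq_at s (oadd d (unpad xs)))) ((inv \<circ> g) xs)" by simp
  next
    fix xs ys assume "xs \<in> fst (lev n (Ls s))" "ys \<in> fst (lev n (Ls s))" and xy: "llt xs ys"
    hence xs: "length xs = n" and ys: "length ys = n" by auto
    have ix: "length (inv (g xs)) = n \<and> phi n d (inv (g xs)) = g xs" using inv gt[OF xs] by blast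
    have iy: "length (inv (g ys)) = n \<and> phi n d (inv (g ys)) = g ys" using inv gt[OF ys] by blast
    have gg: "llt (g xs) (g ys)" using emapD(3)[OF g] xs ys xy by simp
    show "llt ((inv \<circ> g) xs) ((inv \<circ> g) ys)"
    proof (rule ccontr)
      assume "\<not> llt ((inv \<circ> g) xs) ((inv \<circ> g) ys)"
      hence "lle (inv (g ys)) (inv (g xs))" by (simp add: not_llt)
      hence "lle (g ys) (g xs)" using phi_mono[OF d(1) d(3)] ix iy unfolding lle_def by metis
      thus False using gg llt_asym by (auto simp: lle_def)
    qed
  qed
  hence "embg (lev n (Ls s)) (lev n (\<lambda>xs. seq_at s (oadd d (unpad xs))))" unfolding embg_def by blast
  thus "emb s (seq_tail s d)"
    using emb_embg[OF sn Ls_tail(2)[OF sn d]] Ls_tail(1)[OF sn d] by simp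
qed


definition geq :: "'q gs \<Rightarrow> 'q gs \<Rightarrow> bool" where
  "geq X Y \<longleftrightarrow> fst X = fst Y \<and> (\<forall>i\<in>fst X. snd X i = snd Y i)"

lemma geq_sym: "geq X Y \<Longrightarrow> geq Y X"
  by (auto simp: geq_def)

lemma geq_embg: "geq X Y \<Longrightarrow> embg X (Y :: ('q::preorder) gs)"
  by (rule embg_sub) (auto simp: geq_def)

lemma geq_indecg:
  assumes e: "geq X Y" and ind: "indecg (X :: ('q::preorder) gs)"
  shows "indecg Y"
  unfolding indecg_def
proof
  fix d assume "d \<in> fst Y"
  hence "d \<in> fst X" using e by (simp add: geq_def)
  hence "embg X (tailg X d)" using ind by (simp add: indecg_def)
  moreover have "embg (tailg X d) (tailg Y d)" using e by (intro embg_sub) (auto simp: geq_def)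
  ultimately show "embg Y (tailg Y d)" using geq_embg[OF geq_sym[OF e]] embg_trans by blast
qed

lemma geq_omg: "geq X Y \<Longrightarrow> geq (omg X) (omg Y)"
  by (auto simp: geq_def mem_omg)

lemma oc_len: "seq_len t = omega_pow h \<Longrightarrow> seq_len (omega_concat t) = omega_pow (Suc h)"
  by (simp add: omega_concat_def seq_len_def)

lemma oc_the:
  assumes th: "seq_len t = omega_pow h" and v: "length v = h"
  shows "(THE r. is_ord r \<and> olt r (seq_len t) \<and> (\<exists>k. unpad (c # v) = oadd (omul_nat (seq_len t) k) r)) = unpad v"
proof (rule the_equality)
  have uv: "is_ord (unpad v)" "length (unpad v) \<le> h" using length_unpad[of v] v by auto
  have "olt (unpad v) (seq_len t)" using uv th odom_pow[of "unpad v" h] by (simp add: odom_def)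
  moreover have "unpad (c # v) = oadd (omul_nat (seq_len t) c) (unpad v)"
    using oadd_omul[OF uv] th v by (cases "c = 0") (simp_all add: pad_unpad_n unpad_Cons)
  ultimately show "is_ord (unpad v) \<and> olt (unpad v) (seq_len t) \<and> (\<exists>k. unpad (c # v) = oadd (omul_nat (seq_len t) k) (unpad v))"
    using uv by blast
next
  fix r assume r: "is_ord r \<and> olt r (seq_len t) \<and> (\<exists>k. unpad (c # v) = oadd (omul_nat (seq_len t) k) r)"
  then obtain k where k: "unpad (c # v) = oadd (omul_nat (omega_pow h) k) r" using th by auto
  have rl: "length r \<le> h" using r th odom_pow[of r h] by (auto simp: odom_def)
  have e: "pad (Suc h) (unpad (c # v)) = c # v" using v by (simp add: pad_unpad_n)
  have "pad (Suc h) (oadd (omul_nat (omega_pow h) k) r) = k # pad h r"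
  proof (cases "k = 0")
    case True thus ?thesis using oadd_omul[OF _ rl] r rl by (simp add: pad_def Suc_diff_le)
  next
    case False thus ?thesis using oadd_omul[OF _ rl] r rl by (simp add: pad_def)
  qed
  hence "c # v = k # pad h r" using e k by simp
  hence "v = pad h r" by simp
  thus "r = unpad v" using r by simp
qed

lemma Ls_oc: "seq_len t = omega_pow h \<Longrightarrow> length v = h \<Longrightarrow> Ls (omega_concat t) (c # v) = Ls t v"
  using oc_the[of t h v c] by (simp add: Ls_def omega_concat_def seq_at_def)

lemma geq_oc: "seq_len t = omega_pow h \<Longrightarrow> geq (lev (Suc h) (Ls (omega_concat t))) (omg (lev h (Ls t)))"
  by (auto simp: geq_def mem_omg length_Suc_conv Ls_oc)

lemma oc_embg:
  assumes th: "seq_len t = omega_pow h" and sn: "seq_len s = omega_pow n"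
  shows "emb (omega_concat t) s \<longleftrightarrow> embg (omg (lev h (Ls t))) (lev n (Ls (s :: ('q::preorder) tseq)))"
proof -
  have "emb (omega_concat t) s \<longleftrightarrow> embg (lev (Suc h) (Ls (omega_concat t))) (lev n (Ls s))"
    by (rule emb_embg[OF oc_len[OF th] sn])
  also have "\<dots> \<longleftrightarrow> embg (omg (lev h (Ls t))) (lev n (Ls s))"
    using geq_embg[OF geq_oc[OF th]] geq_embg[OF geq_sym[OF geq_oc[OF th]]] embg_trans by blast
  finally show ?thesis .
qed

lemma no_emb_shorter:
  assumes g: "is_ord g" and ga: "olt g a"
    and f1: "\<forall>i\<in>odom a. f i \<in> odom g" and f2: "\<forall>i\<in>odom a. \<forall>j\<in>odom a. olt i j \<longrightarrow> olt (f i) (f j)"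
  shows False
proof -
  have sub: "odom g \<subseteq> odom a" using ga olt_trans by (auto simp: odom_def)
  have claim: "x \<in> odom a \<longrightarrow> \<not> olt (f x) x" for x
  proof (induct x rule: wf_induct_rule[OF wf_lenlex[OF wf_less_than]])
    case (1 x)
    show ?case
    proof (intro impI notI)
      assume x: "x \<in> odom a" and fx: "olt (f x) x"
      have y: "f x \<in> odom a" using f1 x sub by blast
      have "olt (f (f x)) (f x)" using f2 y x fx by blast
      moreover have "(f x, x) \<in> lenlex less_than" using fx by (simp add: olt_def)
      ultimately show False using 1 y by blast
    qed
  qed
  have ga': "g \<in> odom a" using g ga by (simp add: odom_def)
  hence "f g \<in> odom g" using f1 by blast
  hence "olt (f g) g" by (simp add: odom_def)
  thus False using claim ga' by blast
qed

lemma llt_phi_omega: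
  assumes xs: "length xs = Suc m"
  shows "llt xs (phi (Suc m) (omega_pow m) xs)"
proof (cases "xs = replicate (Suc m) 0")
  case True
  thus ?thesis using phi_zero[of "omega_pow m" "Suc m" "Suc m"] by (simp add: pad_def omega_pow_def is_ord_def)
next
  case False
  obtain t a r where x: "xs = replicate t 0 @ a # r" "0 < a" using nz_decomp[of xs] False xs by auto
  have p: "phi (Suc m) (omega_pow m) xs = take t (pad (Suc m) (omega_pow m)) @ (pad (Suc m) (omega_pow m) ! t + a) # r"
    using phi_nz[of "omega_pow m" "Suc m" a t r] x xs by simp
  have pd: "pad (Suc m) (omega_pow m) = 1 # replicate m 0" by (simp add: pad_def omega_pow_def)
  show ?thesis
  proof (cases t)
    case 0 thus ?thesis using p pd x by simp
  next
    case (Suc t') thus ?thesis using p pd x by simp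
  qed
qed

lemma ind_len_pow:
  assumes v: "valid_seq s" and ind: "indecomposable (s :: ('q::preorder) tseq)"
  shows "\<exists>n. seq_len s = omega_pow n"
proof (rule ccontr)
  assume nope: "\<nexists>n. seq_len s = omega_pow n"
  define a where "a = seq_len s"
  have a: "is_ord a" "a \<noteq> []" using v by (simp_all add: valid_seq_def a_def)
  define m where "m = length a - 1"
  have la: "length a = Suc m" using a by (simp add: m_def)
  define d where "d = omega_pow m"
  have ad: "a \<noteq> d" using nope a_def d_def by blast
  obtain c r where cr: "a = c # r" "length r = m" using la by (cases a) auto
  have c: "c \<noteq> 0" using a cr by (simp add: is_ord_def)
  have dpad: "pad (Suc m) d = d" "pad (Suc m) a = a" using la by (simp_all add: pad_def d_def)
  have lda: "llt d a"
  proof (cases "c = 1")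
    case True
    then have "r \<noteq> replicate m 0" using ad cr by (simp add: d_def omega_pow_def)
    then have "llt (replicate m 0) r" using lle_zeros[OF cr(2)] by (simp add: lle_def)
    thus ?thesis using True cr by (simp add: d_def omega_pow_def)
  next
    case False then have "1 < c" using c by simp
    thus ?thesis using cr by (simp add: d_def omega_pow_def)
  qed
  have dprops: "is_ord d" "d \<noteq> []" "length d \<le> Suc m" by (simp_all add: d_def omega_pow_def is_ord_def)
  have "olt d a" using olt_pad[OF dprops(1) a(1) dprops(3)] la lda dpad by simp
  hence "is_ord d \<and> d \<noteq> [] \<and> olt d (seq_len s)" using dprops by (simp add: a_def)
  hence emb: "emb s (seq_tail s d)" using ind[unfolded indecomposable_def, rule_format, of d] by blast
  obtain xs where xs: "length xs = Suc m" "phi (Suc m) d xs = a"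
    using phi_surj[OF dprops(1) dprops(3), of a] la dpad lda by (auto simp: lle_def)
  define g0 where "g0 = unpad xs"
  have ordo: "is_ord (oadd d g0)" using phi_ord[OF dprops(1)] by (simp add: g0_def)
  have g0: "is_ord g0 \<and> oadd d g0 = a"
  proof -
    have "oadd d g0 = unpad (pad (Suc m) (oadd d g0))" using ordo by simp
    also have "\<dots> = unpad a" using xs by (simp add: phi_def g0_def)
    also have "\<dots> = a" using a by (simp add: unpad_ord)
    finally show ?thesis by (simp add: g0_def)
  qed
  have uniq: "g = g0" if gg: "is_ord g \<and> oadd d g = a" for g
  proof -
    have "length g \<le> Suc m" using oadd_props[OF dprops(1), of g] gg la by simp
    hence pg: "length (pad (Suc m) g) = Suc m" by simp
    have "phi (Suc m) d (pad (Suc m) g) = pad (Suc m) a" using gg by (simp add: phi_def)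
    also have "\<dots> = phi (Suc m) d xs" using xs dpad by simp
    finally have pgx: "pad (Suc m) g = xs" using phi_inj[OF dprops(1) dprops(3) pg xs(1)] by simp
    have "g = unpad (pad (Suc m) g)" using gg by simp
    thus ?thesis using pgx by (simp add: g0_def)
  qed
  have "(THE g. is_ord g \<and> oadd d g = seq_len s) = g0"
  proof (rule the_equality)
    show "is_ord g0 \<and> oadd d g0 = seq_len s" using g0 by (simp add: a_def)
  next
    fix g assume "is_ord g \<and> oadd d g = seq_len s"
    thus "g = g0" using uniq[of g] by (simp add: a_def)
  qed
  hence tlen: "seq_len (seq_tail s d) = g0" by (simp add: seq_tail_def seq_len_def)
  have lg: "length g0 \<le> Suc m" using g0 la oadd_props[OF dprops(1), of g0] by simp
  have "llt xs a" using llt_phi_omega[OF xs(1)] xs(2) by (simp add: d_def)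
  hence "llt (pad (Suc m) g0) (pad (Suc m) a)" using xs(1) dpad by (simp add: g0_def pad_unpad_n)
  hence "olt g0 a" using olt_pad[OF _ a(1) lg] g0 la by simp
  moreover obtain f where "\<forall>i\<in>odom (seq_len s). f i \<in> odom (seq_len (seq_tail s d)) \<and> seq_at s i \<le> seq_at (seq_tail s d) (f i)"
    "\<forall>i\<in>odom (seq_len s). \<forall>j\<in>odom (seq_len s). olt i j \<longrightarrow> olt (f i) (f j)"
    using emb unfolding emb_def by blast
  hence "\<forall>i\<in>odom a. f i \<in> odom g0" "\<forall>i\<in>odom a. \<forall>j\<in>odom a. olt i j \<longrightarrow> olt (f i) (f j)"
    unfolding tlen a_def by blast+
  ultimately show False using no_emb_shorter g0 by blast
qed

definition tsq :: "nat \<Rightarrow> (nat list \<Rightarrow> 'q) \<Rightarrow> 'q tseq" where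
  "tsq h r = (omega_pow h, \<lambda>b. r (pad h b))"

lemma tsq_len[simp]: "seq_len (tsq h r) = omega_pow h"
  by (simp add: tsq_def seq_len_def)

lemma Ls_tsq: "length xs = h \<Longrightarrow> Ls (tsq h r) xs = r xs"
  by (simp add: tsq_def Ls_def seq_at_def pad_unpad_n)

lemma geq_tsq: "geq (lev h (Ls (tsq h r))) (lev h r)"
  by (simp add: geq_def Ls_tsq)


lemma emb_trans:
  assumes st: "emb s t" and tu: "emb t (u :: ('q::preorder) tseq)"
  shows "emb s u"
proof -
  obtain f where f1: "\<forall>i\<in>odom (seq_len s). f i \<in> odom (seq_len t) \<and> seq_at s i \<le> seq_at t (f i)"
    and f2: "\<forall>i\<in>odom (seq_len s). \<forall>j\<in>odom (seq_len s). olt i j \<longrightarrow> olt (f i) (f j)"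
    using st unfolding emb_def by blast
  obtain g where g1: "\<forall>i\<in>odom (seq_len t). g i \<in> odom (seq_len u) \<and> seq_at t i \<le> seq_at u (g i)"
    and g2: "\<forall>i\<in>odom (seq_len t). \<forall>j\<in>odom (seq_len t). olt i j \<longrightarrow> olt (g i) (g j)"
    using tu unfolding emb_def by blast
  have "\<forall>i\<in>odom (seq_len s). g (f i) \<in> odom (seq_len u) \<and> seq_at s i \<le> seq_at u (g (f i))"
    using f1 g1 order_trans by metis
  moreover have "\<forall>i\<in>odom (seq_len s). \<forall>j\<in>odom (seq_len s). olt i j \<longrightarrow> olt (g (f i)) (g (f j))"
    using f1 f2 g2 by metis
  ultimately show ?thesis unfolding emb_def by (intro exI[of _ "\<lambda>i. g (f i)"]) blast
qed

lemma seq_equiv_trans: "seq_equiv s t \<Longrightarrow> seq_equiv t u \<Longrightarrow> seq_equiv s (u :: ('q::preorder) tseq)"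
  unfolding seq_equiv_def using emb_trans by blast

lemma seq_equiv_sym: "seq_equiv s t \<Longrightarrow> seq_equiv t s"
  unfolding seq_equiv_def by blast

definition Gs :: "'q tseq \<Rightarrow> 'q gs" where
  "Gs s = lev (length (seq_len s) - 1) (Ls s)"

lemma Gs_pow: "seq_len s = omega_pow n \<Longrightarrow> Gs s = lev n (Ls s)"
  by (simp add: Gs_def)

lemma emb_Gs:
  assumes "seq_len s = omega_pow n" "seq_len t = omega_pow m"
  shows "emb s t \<longleftrightarrow> embg (Gs s) (Gs (t :: ('q::preorder) tseq))"
  using emb_embg[OF assms] by (simp add: Gs_pow[OF assms(1)] Gs_pow[OF assms(2)])

lemma factor_props:
  assumes sn: "seq_len s = omega_pow n" and r: "r \<in> factors (s :: ('q::preorder) tseq)"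
  shows "\<exists>h<n. seq_len r = omega_pow h \<and> r \<in> iF_ww \<and> indecg (lev h (Ls r)) \<and> Ls r ` AL h \<subseteq> Ls s ` AL n
     \<and> embg (omg (lev h (Ls r))) (lev n (Ls s))"
proof -
  from r have r1: "valid_seq r" "olt (seq_len r) (seq_len s)" "finite (seq_range r)" "seq_range r \<subseteq> seq_range s"
      "indecomposable r" "emb (omega_concat r) s"
    by (auto simp: factors_def iF_def)
  obtain h where h: "seq_len r = omega_pow h" using ind_len_pow r1 by blast
  have "h < n" using r1(2) h sn olt_omega_pow by simp
  moreover have "r \<in> iF_ww" using r1 by (simp add: iF_ww_def)
  moreover have "indecg (lev h (Ls r))" using indec_to_g[OF h r1(5)] .
  moreover have "Ls r ` AL h \<subseteq> Ls s ` AL n" using r1(4) seq_range_Ls[OF h] seq_range_Ls[OF sn] by simp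
  moreover have "embg (omg (lev h (Ls r))) (lev n (Ls s))" using oc_embg[OF h sn] r1(6) by simp
  ultimately show ?thesis using h by blast
qed

lemma cand_factor:
  assumes sn: "seq_len s = omega_pow n" and fin: "finite (seq_range s)" and c: "cand n (Ls s) P"
  shows "tsq (fst P) (snd P) \<in> factors (s :: ('q::preorder) tseq)"
proof -
  obtain h \<rho> where P: "P = (h, \<rho>)" by (cases P)
  have c': "h < n" "indecg (lev h \<rho>)" "\<rho> ` AL h \<subseteq> Ls s ` AL n" "embg (omg (lev h \<rho>)) (lev n (Ls s))"
    using c by (simp_all add: cand_def P pl_def)
  define t where "t = tsq h \<rho>"
  have rng: "seq_range t = \<rho> ` AL h"
    using seq_range_Ls[OF tsq_len[of h \<rho>]] Ls_tsq[of _ h \<rho>] by (auto simp: t_def image_def)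
  have v: "valid_seq t" by (simp add: valid_seq_def t_def omega_pow_def is_ord_def)
  have o: "olt (seq_len t) (seq_len s)" using c'(1) sn olt_omega_pow by (simp add: t_def)
  have sub: "seq_range t \<subseteq> seq_range s" using rng c'(3) seq_range_Ls[OF sn] by simp
  have fint: "finite (seq_range t)" using finite_subset[OF sub fin] .
  have ind: "indecomposable t" unfolding t_def
    by (rule g_to_indec[OF tsq_len]) (rule geq_indecg[OF geq_sym[OF geq_tsq] c'(2)])
  have "embg (omg (lev h (Ls t))) (omg (lev h \<rho>))" unfolding t_def by (rule geq_embg[OF geq_omg[OF geq_tsq]])
  hence "embg (omg (lev h (Ls t))) (lev n (Ls s))" using c'(4) embg_trans by blast
  hence oc: "emb (omega_concat t) s" using oc_embg[OF _ sn] by (simp add: t_def)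
  have "t \<in> factors s" using v o fint sub ind oc by (simp add: factors_def iF_def)
  thus ?thesis by (simp add: P t_def)
qed

lemma AL_factors:
  assumes sI: "s \<in> iF_ww" and sn: "seq_len s = omega_pow (Suc k)"
  shows "\<exists>W. W \<noteq> [] \<and> (\<forall>P\<in>set W. cand (Suc k) (Ls s) P \<and> tsq (fst P) (snd P) \<in> factors s)
      \<and> embg (lev (Suc k) (Ls s)) (omg (catg (map pl W)))"
proof -
  have fin: "finite (seq_range s)" and ind: "indecomposable s" using sI by (simp_all add: iF_ww_def)
  have finL: "finite (Ls s ` AL (Suc k))" using fin seq_range_Ls[OF sn] by simp
  have indg: "indecg (lev (Suc k) (Ls s))" using indec_to_g[OF sn ind] .
  obtain W where W: "\<forall>P\<in>set W. cand (Suc k) (Ls s) P" "embg (lev (Suc k) (Ls s)) (omg (catg (map pl W)))"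
    using AL_all[of k] finL indg unfolding ALk_def by blast
  have "W \<noteq> []"
  proof
    assume "W = []"
    then have "fst (omg (catg (map pl W))) = {}" by (auto simp: mem_omg mem_catg)
    moreover obtain x where "x \<in> fst (lev (Suc k) (Ls s))" using lev_ne by blast
    ultimately show False using W(2) unfolding embg_def emap_def by blast
  qed
  thus ?thesis using W cand_factor[OF sn fin] by blast
qed

lemma part1:
  assumes sI: "s \<in> iF_ww" and sn: "seq_len s = omega_pow n"
  shows "finite_mod_equiv (factors (s :: ('q::preorder) tseq))"
proof -
  define R where "R = Ls s ` AL n"
  have finR: "finite R" using sI seq_range_Ls[OF sn] by (simp add: iF_ww_def R_def)
  have tr: "\<exists>t. t \<in> TR R n \<and> embg (Gs r) (canon t) \<and> embg (canon t) (Gs r)" if rf: "r \<in> factors s" for r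
  proof -
    obtain h where h: "h < n" "seq_len r = omega_pow h" "indecg (lev h (Ls r))" "Ls r ` AL h \<subseteq> R"
      using factor_props[OF sn rf] unfolding R_def by blast
    have fr: "finite (Ls r ` AL h)" using finite_subset[OF h(4) finR] .
    obtain t where t: "t \<in> TR (Ls r ` AL h) h" "embg (lev h (Ls r)) (canon t)" "embg (canon t) (lev h (Ls r))"
      using CANON_all[of h] fr h(3) unfolding CANONk_def by blast
    have "t \<in> TR R n" using t(1) TR_mono_R[OF h(4)] TR_mono_n[of h n] h(1) by auto
    thus ?thesis using t Gs_pow[OF h(2)] by auto
  qed
  define tau where "tau r = (SOME t. t \<in> TR R n \<and> embg (Gs r) (canon t) \<and> embg (canon t) (Gs r))" for r
  have tau: "tau r \<in> TR R n \<and> embg (Gs r) (canon (tau r)) \<and> embg (canon (tau r)) (Gs r)" if "r \<in> factors s" for r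
    unfolding tau_def by (rule someI_ex) (rule tr[OF that])
  define rep where "rep t = (SOME r. r \<in> factors s \<and> tau r = t)" for t
  define F where "F = rep ` tau ` factors s"
  have "tau ` factors s \<subseteq> TR R n" using tau by blast
  hence finF: "finite F" unfolding F_def using finite_TR[OF finR] finite_subset by blast
  have rep: "rep (tau r) \<in> factors s \<and> tau (rep (tau r)) = tau r" if "r \<in> factors s" for r
    unfolding rep_def by (rule someI_ex) (use that in blast)
  have sub: "F \<subseteq> factors s" unfolding F_def using rep by blast
  have cov: "\<forall>t\<in>factors s. \<exists>r\<in>F. seq_equiv t r"
  proof
    fix r assume rf: "r \<in> factors s"
    define r' where "r' = rep (tau r)"
    have r': "r' \<in> factors s" "tau r' = tau r" using rep[OF rf] by (simp_all add: r'_def)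
    obtain h where h: "seq_len r = omega_pow h" using factor_props[OF sn rf] by blast
    obtain h' where h': "seq_len r' = omega_pow h'" using factor_props[OF sn r'(1)] by blast
    have "embg (Gs r) (Gs r')" using tau[OF rf] tau[OF r'(1)] r'(2) embg_trans by metis
    moreover have "embg (Gs r') (Gs r)" using tau[OF rf] tau[OF r'(1)] r'(2) embg_trans by metis
    ultimately have "seq_equiv r r'" using emb_Gs[OF h h'] emb_Gs[OF h' h] by (simp add: seq_equiv_def)
    moreover have "r' \<in> F" using rf by (simp add: F_def r'_def)
    ultimately show "\<exists>x\<in>F. seq_equiv r x" by blast
  qed
  show ?thesis unfolding finite_mod_equiv_def using finF sub cov by blast
qed


lemma part2: "\<forall>s. s \<in> iF_ww \<longrightarrow> seq_len s = omega_pow n \<longrightarrow> (\<exists>t. is_g s t \<and> tree_wf t)"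
proof (induct n rule: less_induct)
  case (less n)
  show ?case
  proof (intro allI impI)
    fix s :: "('a::preorder) tseq" assume sI: "s \<in> iF_ww" and sn: "seq_len s = omega_pow n"
    show "\<exists>t. is_g s t \<and> tree_wf t"
    proof (cases n)
      case 0
      have "is_g s (Leaf (seq_at s []))" using sn 0 by (simp add: is_g.intros)
      thus ?thesis by (blast intro: tree_wf.intros)
    next
      case (Suc k)
      obtain F0 where F0: "finite F0" "F0 \<subseteq> factors s" "\<forall>t\<in>factors s. \<exists>r\<in>F0. seq_equiv t r"
        using part1[OF sI sn] unfolding finite_mod_equiv_def by blast
      define S where "S = {F. F \<subseteq> F0 \<and> (\<forall>t\<in>factors s. \<exists>r\<in>F. seq_equiv t r)}"
      have F0S: "F0 \<in> S" using F0 by (simp add: S_def)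
      define k0 where "k0 = (LEAST k. \<exists>F\<in>S. card F = k)"
      have "\<exists>F\<in>S. card F = k0" unfolding k0_def by (rule LeastI_ex) (use F0S in blast)
      then obtain F where FS: "F \<in> S" and Fk: "card F = k0" by blast
      have min: "card F \<le> card F'" if "F' \<in> S" for F'
        unfolding Fk k0_def by (rule Least_le) (use that in blast)
      have Fsub: "F \<subseteq> F0" and Fcov: "\<forall>t\<in>factors s. \<exists>r\<in>F. seq_equiv t r" using FS by (simp_all add: S_def)
      have finF: "finite F" using finite_subset[OF Fsub F0(1)] .
      have Ffac: "F \<subseteq> factors s" using Fsub F0(2) by blast
      have pw: "r = r'" if r: "r \<in> F" and r': "r' \<in> F" and e: "seq_equiv r r'" for r r'
      proof (rule ccontr)
        assume ne: "r \<noteq> r'"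
        define F' where "F' = F - {r'}"
        have "F' \<in> S"
        proof -
          have "F' \<subseteq> F0" using Fsub by (auto simp: F'_def)
          moreover have "\<forall>t\<in>factors s. \<exists>x\<in>F'. seq_equiv t x"
          proof
            fix t assume "t \<in> factors s"
            then obtain x where x: "x \<in> F" "seq_equiv t x" using Fcov by blast
            show "\<exists>x\<in>F'. seq_equiv t x"
            proof (cases "x = r'")
              case True
              hence "seq_equiv t r" using x(2) seq_equiv_sym[OF e] seq_equiv_trans by blast
              moreover have "r \<in> F'" using r ne by (simp add: F'_def)
              ultimately show ?thesis by blast
            next
              case False thus ?thesis using x by (auto simp: F'_def)
            qed
          qed
          ultimately show ?thesis by (simp add: S_def)
        qed
        hence "card F \<le> card F'" by (rule min)
        moreover have "card F' < card F" unfolding F'_def by (rule card_Diff1_less[OF finF r'])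
        ultimately show False by simp
      qed
      have IH: "\<exists>t. is_g r t \<and> tree_wf t" if rF: "r \<in> F" for r
      proof -
        have rf: "r \<in> factors s" using rF Ffac by blast
        obtain h where h: "h < n" "seq_len r = omega_pow h" "r \<in> iF_ww" using factor_props[OF sn rf] by blast
        thus ?thesis using less[OF h(1)] by blast
      qed
      define hh where "hh r = (SOME t :: 'a ftree. is_g r t \<and> tree_wf t)" for r :: "'a tseq"
      have hh: "is_g r (hh r) \<and> tree_wf (hh r)" if "r \<in> F" for r
        unfolding hh_def by (rule someI_ex) (rule IH[OF that])
      define FF where "FF = Abs_fset F"
      have fFF: "fset FF = F" using finF by (simp add: FF_def Abs_fset_inverse)
      have isg: "is_g s (Node (hh |`| FF))"
      proof (rule is_g.intros(2)[of s n])
        show "seq_len s = omega_pow n" by (rule sn)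
        show "0 < n" using Suc by simp
        show "fset FF \<subseteq> factors s" using fFF Ffac by simp
        show "\<forall>t\<in>factors s. \<exists>r. r |\<in>| FF \<and> seq_equiv t r" using Fcov fFF by blast
        show "\<forall>r r'. r |\<in>| FF \<longrightarrow> r' |\<in>| FF \<longrightarrow> seq_equiv r r' \<longrightarrow> r = r'" using pw fFF by auto
        show "\<forall>r. r |\<in>| FF \<longrightarrow> is_g r (hh r)" using hh fFF by auto
      qed
      obtain W where W: "W \<noteq> []" "\<forall>P\<in>set W. tsq (fst P) (snd P) \<in> factors s"
        using AL_factors[OF sI sn[unfolded Suc]] by blast
      then obtain P where "P \<in> set W" by (cases W) auto
      hence "tsq (fst P) (snd P) \<in> factors s" using W by blast
      then obtain r0 where "r0 \<in> F" using Fcov by blast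
      hence FFne: "FF \<noteq> {||}" using fFF by auto
      have "tree_wf (Node (hh |`| FF))"
      proof (rule tree_wf.intros(2))
        show "hh |`| FF \<noteq> {||}" using FFne by simp
        show "\<forall>t. t |\<in>| hh |`| FF \<longrightarrow> tree_wf t" using hh fFF by auto
      qed
      thus ?thesis using isg by blast
    qed
  qed
qed

lemma canon_G:
  assumes "is_g s T"
  shows "s \<in> iF_ww \<longrightarrow> embg (Gs s) (canon T) \<and> embg (canon T) (Gs (s :: ('q::preorder) tseq)) \<and> tree_wf T"
  using assms
proof (induct rule: is_g.induct)
  case (g_one s)
  have G: "Gs s = lev 0 (Ls s)" using Gs_pow[OF g_one] .
  have e1: "embg (Gs s) (canon (Leaf (seq_at s [])))" unfolding G by (rule embg_sub) (auto simp: Ls_def)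
  have e2: "embg (canon (Leaf (seq_at s []))) (Gs s)" unfolding G by (rule embg_sub) (auto simp: Ls_def)
  show ?case using e1 e2 by (blast intro: tree_wf.intros)
next
  case (g_pow s n F h)
  show ?case
  proof
    assume sI: "s \<in> iF_ww"
    have sn: "seq_len s = omega_pow n" by (rule g_pow(1))
    obtain k where k: "n = Suc k" using g_pow(2) by (cases n) auto
    have G: "Gs s = lev n (Ls s)" using Gs_pow[OF sn] .
    have indg: "indecg (lev n (Ls s))" using indec_to_g[OF sn] sI by (simp add: iF_ww_def)
    have rI: "r \<in> factors s" if "r |\<in>| F" for r using g_pow(3) that by blast
    have IH: "embg (Gs r) (canon (h r)) \<and> embg (canon (h r)) (Gs r) \<and> tree_wf (h r)" if rF: "r |\<in>| F" for r
    proof -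
      obtain hr where "hr < n" "seq_len r = omega_pow hr" "r \<in> iF_ww" using factor_props[OF sn rI[OF rF]] by blast
      thus ?thesis using g_pow(6) rF by blast
    qed
    define L where "L = lof (fimage canon (fimage h F))"
    have setL: "set L = canon ` h ` fset F" by (simp add: L_def image_comp)
    have cT: "canon (Node (h |`| F)) = omg (catg L)" by (simp add: L_def)
    have e1: "embg (omg (catg L)) (lev n (Ls s))"
    proof (rule omglist[OF indg, of "replicate n 0"])
      show "replicate n 0 \<in> fst (lev n (Ls s))" by simp
      fix X assume "X \<in> set L"
      then obtain r where rF: "r |\<in>| F" and X: "X = canon (h r)" using setL by auto
      obtain hr where hr: "hr < n" "seq_len r = omega_pow hr" "embg (omg (lev hr (Ls r))) (lev n (Ls s))"
        using factor_props[OF sn rI[OF rF]] by blast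
      have "embg (omg X) (omg (Gs r))" using omg_mono IH[OF rF] X by blast
      hence "embg (omg X) (lev n (Ls s))" using hr(3) Gs_pow[OF hr(2)] embg_trans by metis
      moreover have "fst X \<noteq> {}" using canon_ne IH[OF rF] X by blast
      ultimately show "fst X \<noteq> {} \<and> embg (omg X) (lev n (Ls s))" by blast
    qed
    obtain W where W: "W \<noteq> []" "\<forall>P\<in>set W. cand n (Ls s) P \<and> tsq (fst P) (snd P) \<in> factors s"
      "embg (lev n (Ls s)) (omg (catg (map pl W)))"
      using AL_factors[OF sI sn[unfolded k]] k by blast
    have e2: "embg (omg (catg (map pl W))) (omg (catg L))"
    proof (rule omg_catg_mono)
      fix X assume "X \<in> set (map pl W)"
      then obtain P where P: "P \<in> set W" "X = pl P" by auto
      have tf: "tsq (fst P) (snd P) \<in> factors s" using W(2) P(1) by blast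
      then obtain r where rF: "r |\<in>| F" and eq: "seq_equiv (tsq (fst P) (snd P)) r" using g_pow(4) by blast
      obtain hr where hr: "seq_len r = omega_pow hr" using factor_props[OF sn rI[OF rF]] by blast
      have "embg (Gs (tsq (fst P) (snd P))) (Gs r)"
        using eq emb_Gs[OF tsq_len hr] by (simp add: seq_equiv_def)
      moreover have "embg (pl P) (Gs (tsq (fst P) (snd P)))"
        unfolding Gs_pow[OF tsq_len] pl_def by (rule geq_embg[OF geq_sym[OF geq_tsq]])
      ultimately have "embg X (canon (h r))" using IH[OF rF] P(2) embg_trans by metis
      moreover have "canon (h r) \<in> set L" using setL rF by auto
      ultimately show "\<exists>Y\<in>set L. embg X Y" by blast
    qed
    have Fne: "F \<noteq> {||}"
    proof -
      obtain P where "P \<in> set W" using W(1) by (cases W) auto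
      hence "tsq (fst P) (snd P) \<in> factors s" using W(2) by blast
      then obtain r where "r |\<in>| F" using g_pow(4) by blast
      thus ?thesis by auto
    qed
    have wf: "tree_wf (Node (h |`| F))"
    proof (rule tree_wf.intros(2))
      show "h |`| F \<noteq> {||}" using Fne by simp
      show "\<forall>t. t |\<in>| h |`| F \<longrightarrow> tree_wf t" using IH by auto
    qed
    show "embg (Gs s) (canon (Node (h |`| F))) \<and> embg (canon (Node (h |`| F))) (Gs s) \<and> tree_wf (Node (h |`| F))"
      using e1 e2 W(3) wf embg_trans unfolding cT G by metis
  qed
qed

theorem proposition4p25:
  fixes IF :: "('q::preorder) tseq set"
  assumes "IF = iF_ww"
  shows "(\<forall>s\<in>IF. \<forall>n. 0 < n \<and> seq_len s = omega_pow n \<longrightarrow> finite_mod_equiv (factors s))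
    \<and> (\<forall>s\<in>IF. \<exists>t. is_g s t \<and> tree_wf t)
    \<and> (\<forall>s\<in>IF. \<forall>t\<in>IF. \<forall>gs gt. is_g s gs \<longrightarrow> is_g t gt \<longrightarrow> (emb s t \<longleftrightarrow> le_T gs gt))"
proof (intro conjI)
  have lp: "\<exists>n. seq_len s = omega_pow n" if sIF: "s \<in> IF" for s
  proof -
    have "valid_seq s" "indecomposable s" using sIF assms by (simp_all add: iF_ww_def)
    thus ?thesis using ind_len_pow by blast
  qed
  show "\<forall>s\<in>IF. \<forall>n. 0 < n \<and> seq_len s = omega_pow n \<longrightarrow> finite_mod_equiv (factors s)"
    using part1 assms by blast
  show "\<forall>s\<in>IF. \<exists>t. is_g s t \<and> tree_wf t"
    using part2 lp assms by blast
  show "\<forall>s\<in>IF. \<forall>t\<in>IF. \<forall>gs gt. is_g s gs \<longrightarrow> is_g t gt \<longrightarrow> (emb s t \<longleftrightarrow> le_T gs gt)"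
  proof (intro ballI allI impI)
    fix s t gs gt assume s: "s \<in> IF" and t: "t \<in> IF" and gs: "is_g s gs" and gt: "is_g t gt"
    obtain n where sn: "seq_len s = omega_pow n" using lp[OF s] by blast
    obtain m where tm: "seq_len t = omega_pow m" using lp[OF t] by blast
    have cs: "embg (Gs s) (canon gs) \<and> embg (canon gs) (Gs s) \<and> tree_wf gs" using canon_G[OF gs] s assms by blast
    have ct: "embg (Gs t) (canon gt) \<and> embg (canon gt) (Gs t) \<and> tree_wf gt" using canon_G[OF gt] t assms by blast
    have "emb s t \<longleftrightarrow> embg (Gs s) (Gs t)" by (rule emb_Gs[OF sn tm])
    also have "\<dots> \<longleftrightarrow> embg (canon gs) (canon gt)" using cs ct embg_trans by metis
    also have "\<dots> \<longleftrightarrow> le_T gs gt" using canon_le_T_iff cs ct by blast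
    finally show "emb s t \<longleftrightarrow> le_T gs gt" .
  qed
qed

end
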